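(* Let $\mathfrak g$ be a real nilpotent Lie algebra with a metric $\langle,\rangle_{\mathfrak g}$ satisfying $\operatorname{Ric}=\lambda\,\mathrm{id}+D$ with $\lambda\in\mathbb R$ and $D\in\operatorname{Der}\mathfrak g$. For an endomorphism $f$ of $\mathfrak g$ let $f^s=\frac12(f+f^* )$ be its self-adjoint part, $f^*$ denoting the adjoint with respect to $\langle,\rangle_{\mathfrak g}$. Let $\mathfrak a$ be a subspace of $\operatorname{Der}\mathfrak g$ such that $[\mathfrak a,\mathfrak a]=0$, $\mathfrak a^s:=\{f^s : f\in\mathfrak a\}\subset\operatorname{Der}\mathfrak g$ and $[\mathfrak a,\mathfrak a^s]=0$, and define the symmetric bilinear form $\langle f,g\rangle_s=\operatorname{Tr}(f^s\circ g^s)$ on $\mathfrak a$. All semidirect products below use $[X,v]=X(v)$ for $X\in\mathfrak a$, $v\in\mathfrak g$, and the summands are orthogonal. (1) If $\lambda\neq0$, $D\in\mathfrak a^s$ and $\langle,\rangle_s$ is nondegenerate on $\mathfrak a$, then the metric $\langle,\rangle_{\mathfrak g}-\frac1\lambda\langle,\rangle_s$ on $\tilde{\mathfrak g}=\mathfrak g\rtimes\mathfrak a$ is Einstein with $\widetilde{\operatorname{Ric}}=\lambda\,\mathrm{id}$. (2) If $\lambda=0$, $D\neq0$, $D=H^s$ for some $H\in\mathfrak a$, and $\langle,\rangle_s$ is zero, then for any metric $\langle,\rangle_{\mathfrak a}$ on $\mathfrak a$ such that $\langle H,X\rangle_{\mathfrak a}=\operatorname{Tr}X$ for all $X\in\mathfrak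 a$, the metric $\langle,\rangle_{\mathfrak g}+\langle,\rangle_{\mathfrak a}$ on $\tilde{\mathfrak g}=\mathfrak g\rtimes\mathfrak a$ is Ricci-flat. (3) If $\lambda=0$, $D=0$, all elements of $\mathfrak a$ are trace-free and $\langle,\rangle_s$ is zero, then for any metric $\langle,\rangle_{\mathfrak a}$ on $\mathfrak a$ the metric $\langle,\rangle_{\mathfrak g}+\langle,\rangle_{\mathfrak a}$ on $\tilde{\mathfrak g}=\mathfrak g\rtimes\mathfrak a$ is Ricci-flat. (4) If $\lambda=0$, $D=0$, not all elements of $\mathfrak a$ are trace-free and $\langle,\rangle_s$ is zero, then for any metric $\langle,\rangle_{\mathfrak a}$ on $\mathfrak a$ whose restriction to the subspace $\mathfrak a_0\subset\mathfrak a$ of trace-free elements is nondegenerate, the metric $\langle,\rangle_{\mathfrak g}+\langle,\rangle_{\mathfrak a}+\langle,\rangle_H$ on $\tilde{\mathfrak g}=\mathfrak g\rtimes(\mathfrak a\oplus\operatorname{Span}\{H\})$ is Ricci-flat, where $H$ acts trivially ($\operatorname{ad}H=0$) and $\langle,\rangle_H$ is the symmetric form with $\langle H,X\rangle_H=\operatorname{Tr}X$ for $X\in\mathfrak a$, $\langle H,H\rangle_H=0$ and vanishing on $\mathfrak a\times\mathfrak a$.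
   Context: A metric on a Lie algebra (or vector space) is a nondegenerate symmetric bilinear form, possibly indefinite; Ricci operators/tensors are those of the corresponding left-invariant pseudo-Riemannian metrics on simply connected Lie groups. *)

theory Defs
  imports "HOL-Analysis.Analysis"
begin

definition bilinear_on :: "'a::real_vector set \<Rightarrow> ('a \<Rightarrow> 'a \<Rightarrow> 'b::real_vector) \<Rightarrow> bool" where
  "bilinear_on V b \<longleftrightarrow>
     (\<forall>x\<in>V. \<forall>y\<in>V. \<forall>z\<in>V. \<forall>c::real.
        b (x + y) z = b x z + b y z \<and> b (c *\<^sub>R x) z = c *\<^sub>R b x z \<and>
        b z (x + y) = b z x + b z y \<and> b z (c *\<^sub>R x) = c *\<^sub>R b z x)"

definition metric_on :: "'a::real_vector set \<Rightarrow> ('a \<Rightarrow> 'a \<Rightarrow> real) \<Rightarrow> bool" where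
  "metric_on V q \<longleftrightarrow> subspace V \<and> bilinear_on V q \<and>
     (\<forall>x\<in>V. \<forall>y\<in>V. q x y = q y x) \<and>
     (\<forall>x\<in>V. (\<forall>y\<in>V. q x y = 0) \<longrightarrow> x = 0)"

definition lie_algebra_on :: "'a::real_vector set \<Rightarrow> ('a \<Rightarrow> 'a \<Rightarrow> 'a) \<Rightarrow> bool" where
  "lie_algebra_on V br \<longleftrightarrow> subspace V \<and> (\<forall>x\<in>V. \<forall>y\<in>V. br x y \<in> V) \<and>
     bilinear_on V br \<and> (\<forall>x\<in>V. br x x = 0) \<and>
     (\<forall>x\<in>V. \<forall>y\<in>V. \<forall>z\<in>V. br x (br y z) + br y (br z x) + br z (br x y) = 0)"

fun lower_central :: "'a::real_vector set \<Rightarrow> ('a \<Rightarrow> 'a \<Rightarrow> 'a) \<Rightarrow> nat \<Rightarrow> 'a set" where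
  "lower_central V br 0 = V"
| "lower_central V br (Suc k) = span {br x y | x y. x \<in> V \<and> y \<in> lower_central V br k}"

definition nilpotent_lie :: "'a::real_vector set \<Rightarrow> ('a \<Rightarrow> 'a \<Rightarrow> 'a) \<Rightarrow> bool" where
  "nilpotent_lie V br \<longleftrightarrow> (\<exists>k. lower_central V br k \<subseteq> {0})"

definition trace_on :: "'a::euclidean_space set \<Rightarrow> ('a \<Rightarrow> 'a) \<Rightarrow> real" where
  "trace_on V f = (let B = (SOME B. B \<subseteq> V \<and> independent B \<and> span B = V)
                   in \<Sum>b\<in>B. real_vector.representation B (f b) b)"

text \<open>Levi-Civita connection of the left-invariant metric (Koszul formula).\<close>
definition lc_conn :: "'a::real_vector set \<Rightarrow> ('a \<Rightarrow> 'a \<Rightarrow> 'a) \<Rightarrow> ('a \<Rightarrow> 'a \<Rightarrow> real) \<Rightarrow> 'a \<Rightarrow> 'a \<Rightarrow> 'a" where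
  "lc_conn V br q x y = (THE w. w \<in> V \<and>
     (\<forall>z\<in>V. 2 * q w z = q (br x y) z - q (br y z) x + q (br z x) y))"

definition curv :: "'a::real_vector set \<Rightarrow> ('a \<Rightarrow> 'a \<Rightarrow> 'a) \<Rightarrow> ('a \<Rightarrow> 'a \<Rightarrow> real) \<Rightarrow> 'a \<Rightarrow> 'a \<Rightarrow> 'a \<Rightarrow> 'a" where
  "curv V br q x y z = lc_conn V br q x (lc_conn V br q y z) - lc_conn V br q y (lc_conn V br q x z)
                        - lc_conn V br q (br x y) z"

definition ricci_tensor :: "'a::euclidean_space set \<Rightarrow> ('a \<Rightarrow> 'a \<Rightarrow> 'a) \<Rightarrow> ('a \<Rightarrow> 'a \<Rightarrow> real) \<Rightarrow> 'a \<Rightarrow> 'a \<Rightarrow> real" where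
  "ricci_tensor V br q x y = trace_on V (\<lambda>z. curv V br q z x y)"

definition ricci_op :: "'a::euclidean_space set \<Rightarrow> ('a \<Rightarrow> 'a \<Rightarrow> 'a) \<Rightarrow> ('a \<Rightarrow> 'a \<Rightarrow> real) \<Rightarrow> 'a \<Rightarrow> 'a" where
  "ricci_op V br q x = (THE w. w \<in> V \<and> (\<forall>z\<in>V. q w z = ricci_tensor V br q x z))"

definition derivations :: "(real^'n \<Rightarrow> real^'n \<Rightarrow> real^'n) \<Rightarrow> (real^'n^'n) set" where
  "derivations br = {D. \<forall>x y. D *v br x y = br (D *v x) y + br x (D *v y)}"

definition adj :: "(real^'n \<Rightarrow> real^'n \<Rightarrow> real) \<Rightarrow> real^'n^'n \<Rightarrow> real^'n^'n" where
  "adj q f = matrix (\<lambda>y. THE w. \<forall>x. q (f *v x) y = q x w)"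

definition sym_part :: "(real^'n \<Rightarrow> real^'n \<Rightarrow> real) \<Rightarrow> real^'n^'n \<Rightarrow> real^'n^'n" where
  "sym_part q f = (1/2) *\<^sub>R (f + adj q f)"

definition sd_br :: "(real^'n \<Rightarrow> real^'n \<Rightarrow> real^'n) \<Rightarrow> ((real^'n) \<times> (real^'n^'n)) \<Rightarrow> ((real^'n) \<times> (real^'n^'n)) \<Rightarrow> ((real^'n) \<times> (real^'n^'n))" where
  "sd_br br p p' = (case p of (v, X) \<Rightarrow> case p' of (w, Y) \<Rightarrow>
      (br v w + X *v w - Y *v v, X ** Y - Y ** X))"

definition sd_metric :: "(real^'n \<Rightarrow> real^'n \<Rightarrow> real) \<Rightarrow> (real^'n^'n \<Rightarrow> real^'n^'n \<Rightarrow> real) \<Rightarrow> ((real^'n) \<times> (real^'n^'n)) \<Rightarrow> ((real^'n) \<times> (real^'n^'n)) \<Rightarrow> real" where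
  "sd_metric q qa p p' = (case p of (v, X) \<Rightarrow> case p' of (w, Y) \<Rightarrow> q v w + qa X Y)"

text \<open>Extended semidirect product g \<rtimes> (a \<oplus> Span{H}), elements (v, X, t) = v + X + tH, ad H = 0.\<close>
definition sdH_br :: "(real^'n \<Rightarrow> real^'n \<Rightarrow> real^'n) \<Rightarrow> ((real^'n) \<times> (real^'n^'n) \<times> real) \<Rightarrow> ((real^'n) \<times> (real^'n^'n) \<times> real) \<Rightarrow> ((real^'n) \<times> (real^'n^'n) \<times> real)" where
  "sdH_br br p p' = (case p of (v, X, s) \<Rightarrow> case p' of (w, Y, t) \<Rightarrow>
      (br v w + X *v w - Y *v v, X ** Y - Y ** X, 0))"

definition sdH_metric :: "(real^'n \<Rightarrow> real^'n \<Rightarrow> real) \<Rightarrow> (real^'n^'n \<Rightarrow> real^'n^'n \<Rightarrow> real) \<Rightarrow> ((real^'n) \<times> (real^'n^'n) \<times> real) \<Rightarrow> ((real^'n) \<times> (real^'n^'n) \<times> real) \<Rightarrow> real" where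
  "sdH_metric q qa p p' = (case p of (v, X, s) \<Rightarrow> case p' of (w, Y, t) \<Rightarrow>
      q v w + qa X Y + s * trace Y + t * trace X)"

end

theory Submission
  imports Defs
begin


definition lin_on :: "'a::real_vector set \<Rightarrow> ('a \<Rightarrow> 'a) \<Rightarrow> bool" where
 "lin_on V f \<longleftrightarrow> (\<forall>x\<in>V. f x \<in> V) \<and> (\<forall>x\<in>V. \<forall>y\<in>V. f (x + y) = f x + f y) \<and>
    (\<forall>x\<in>V. \<forall>c. f (c *\<^sub>R x) = c *\<^sub>R f x)"

definition is_frame :: "'a::real_vector set \<Rightarrow> ('a \<Rightarrow> 'a \<Rightarrow> real) \<Rightarrow> 'i set \<Rightarrow> ('i \<Rightarrow> 'a) \<Rightarrow> ('i \<Rightarrow> 'a) \<Rightarrow> bool" where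
 "is_frame V q I x y \<longleftrightarrow> finite I \<and> (\<forall>i\<in>I. x i \<in> V \<and> y i \<in> V) \<and>
    (\<forall>u\<in>V. u = (\<Sum>i\<in>I. q u (y i) *\<^sub>R x i))"

lemma lin_on_sum:
  assumes "lin_on V f" "subspace V" "finite I" "\<And>i. i \<in> I \<Longrightarrow> u i \<in> V"
  shows "f (\<Sum>i\<in>I. c i *\<^sub>R u i) = (\<Sum>i\<in>I. c i *\<^sub>R f (u i))"
  using assms(3,4)
proof (induction I rule: finite_induct)
  case empty
  have "f 0 = f (0 *\<^sub>R 0)" by simp
  also have "\<dots> = 0" using assms(1,2) unfolding lin_on_def by (metis scale_zero_left subspace_0)
  finally show ?case by simp
next
  case (insert a F)
  have "(\<Sum>i\<in>F. c i *\<^sub>R u i) \<in> V" using insert assms(2)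
    by (intro subspace_sum subspace_scale) auto
  moreover have "c a *\<^sub>R u a \<in> V" using insert assms(2) by (simp add: subspace_scale)
  ultimately show ?case using insert assms(1) unfolding lin_on_def by simp
qed

lemma lin_on_mem: "lin_on V f \<Longrightarrow> x \<in> V \<Longrightarrow> f x \<in> V"
  unfolding lin_on_def by blast

context
  fixes V :: "'a::euclidean_space set" and q
  assumes M: "metric_on V q"
begin

lemma sub: "subspace V" using M unfolding metric_on_def by blast

lemma qsym: "x \<in> V \<Longrightarrow> y \<in> V \<Longrightarrow> q x y = q y x"
  using M unfolding metric_on_def by blast

lemma bil: "bilinear_on V q" using M unfolding metric_on_def by blast

lemma qadd1: "x \<in> V \<Longrightarrow> y \<in> V \<Longrightarrow> z \<in> V \<Longrightarrow> q (x + y) z = q x z + q y z"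
  using bil[unfolded bilinear_on_def, rule_format, of x y z 0] by blast
lemma qadd2: "x \<in> V \<Longrightarrow> y \<in> V \<Longrightarrow> z \<in> V \<Longrightarrow> q z (x + y) = q z x + q z y"
  using bil[unfolded bilinear_on_def, rule_format, of x y z 0] by blast
lemma qscale1: "x \<in> V \<Longrightarrow> z \<in> V \<Longrightarrow> q (c *\<^sub>R x) z = c * q x z"
  using bil[unfolded bilinear_on_def, rule_format, of x x z c] by simp
lemma qscale2: "x \<in> V \<Longrightarrow> z \<in> V \<Longrightarrow> q z (c *\<^sub>R x) = c * q z x"
  using bil[unfolded bilinear_on_def, rule_format, of x x z c] by simp
lemma q01: "z \<in> V \<Longrightarrow> q 0 z = 0"
  using qscale1[of 0 z 0] sub by (simp add: subspace_0)
lemma q02: "z \<in> V \<Longrightarrow> q z 0 = 0"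
  using qscale2[of 0 z 0] sub by (simp add: subspace_0)
lemma qneg1: "x \<in> V \<Longrightarrow> z \<in> V \<Longrightarrow> q (- x) z = - q x z"
  using qscale1[of x z "-1"] by simp
lemma qneg2: "x \<in> V \<Longrightarrow> z \<in> V \<Longrightarrow> q z (- x) = - q z x"
  using qscale2[of x z "-1"] by simp
lemma qdiff1: "x \<in> V \<Longrightarrow> y \<in> V \<Longrightarrow> z \<in> V \<Longrightarrow> q (x - y) z = q x z - q y z"
  using qadd1[of x "-y" z] qneg1[of y z] sub by (simp add: subspace_neg)
lemma qdiff2: "x \<in> V \<Longrightarrow> y \<in> V \<Longrightarrow> z \<in> V \<Longrightarrow> q z (x - y) = q z x - q z y"
  using qadd2[of x "-y" z] qneg2[of y z] sub by (simp add: subspace_neg)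

lemma qsum1: "finite I \<Longrightarrow> (\<And>i. i \<in> I \<Longrightarrow> u i \<in> V) \<Longrightarrow> z \<in> V \<Longrightarrow>
    q (\<Sum>i\<in>I. u i) z = (\<Sum>i\<in>I. q (u i) z)"
proof (induction I rule: finite_induct)
  case empty then show ?case by (simp add: q01)
next
  case (insert a F)
  have "(\<Sum>i\<in>F. u i) \<in> V" using insert sub by (intro subspace_sum) auto
  then show ?case using insert by (simp add: qadd1)
qed

lemma qsum2: "finite I \<Longrightarrow> (\<And>i. i \<in> I \<Longrightarrow> u i \<in> V) \<Longrightarrow> z \<in> V \<Longrightarrow>
    q z (\<Sum>i\<in>I. u i) = (\<Sum>i\<in>I. q z (u i))"
proof (induction I rule: finite_induct)
  case empty then show ?case by (simp add: q02)
next
  case (insert a F)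
  have "(\<Sum>i\<in>F. u i) \<in> V" using insert sub by (intro subspace_sum) auto
  then show ?case using insert by (simp add: qadd2)
qed

lemma qlin1: "finite I \<Longrightarrow> (\<And>i. i \<in> I \<Longrightarrow> u i \<in> V) \<Longrightarrow> z \<in> V \<Longrightarrow>
    q (\<Sum>i\<in>I. c i *\<^sub>R u i) z = (\<Sum>i\<in>I. c i * q (u i) z)"
  using sub by (subst qsum1) (auto simp: subspace_scale qscale1)

lemma qlin2: "finite I \<Longrightarrow> (\<And>i. i \<in> I \<Longrightarrow> u i \<in> V) \<Longrightarrow> z \<in> V \<Longrightarrow>
    q z (\<Sum>i\<in>I. c i *\<^sub>R u i) = (\<Sum>i\<in>I. c i * q z (u i))"
  using sub by (subst qsum2) (auto simp: subspace_scale qscale2)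

lemma nondeg1: "x \<in> V \<Longrightarrow> (\<And>y. y \<in> V \<Longrightarrow> q x y = 0) \<Longrightarrow> x = 0"
  using M unfolding metric_on_def by blast

lemma nondeg2: "x \<in> V \<Longrightarrow> (\<And>y. y \<in> V \<Longrightarrow> q y x = 0) \<Longrightarrow> x = 0"
  using nondeg1 qsym by metis

lemma q_eqI: "x \<in> V \<Longrightarrow> x' \<in> V \<Longrightarrow> (\<And>z. z \<in> V \<Longrightarrow> q x z = q x' z) \<Longrightarrow> x = x'"
  using nondeg1[of "x - x'"] sub by (simp add: subspace_diff qdiff1)

lemma q_eqI2: "x \<in> V \<Longrightarrow> x' \<in> V \<Longrightarrow> (\<And>z. z \<in> V \<Longrightarrow> q z x = q z x') \<Longrightarrow> x = x'"
  using q_eqI qsym by metis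

section \<open>Frames\<close>

lemma frame_mem: "is_frame V q I x y \<Longrightarrow> i \<in> I \<Longrightarrow> x i \<in> V \<and> y i \<in> V"
  unfolding is_frame_def by blast

lemma frame_exp: "is_frame V q I x y \<Longrightarrow> u \<in> V \<Longrightarrow> u = (\<Sum>i\<in>I. q u (y i) *\<^sub>R x i)"
  unfolding is_frame_def by blast

lemma frame_q: assumes F: "is_frame V q I x y" and u: "u \<in> V" and w: "w \<in> V"
  shows "q u w = (\<Sum>i\<in>I. q u (y i) * q (x i) w)"
proof -
  have "q u w = q (\<Sum>i\<in>I. q u (y i) *\<^sub>R x i) w" using frame_exp[OF F u] by simp
  also have "\<dots> = (\<Sum>i\<in>I. q u (y i) * q (x i) w)"
    using F w by (intro qlin1) (auto simp: is_frame_def)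
  finally show ?thesis .
qed

lemma frame_swap: assumes F: "is_frame V q I x y" shows "is_frame V q I y x"
proof -
  have fin: "finite I" using F by (simp add: is_frame_def)
  { fix u assume u: "u \<in> V"
    let ?w = "\<Sum>i\<in>I. q u (x i) *\<^sub>R y i"
    have w: "?w \<in> V" using sub F fin by (intro subspace_sum subspace_scale) (auto simp: is_frame_def)
    have "u = ?w"
    proof (rule q_eqI[OF u w])
      fix z assume z: "z \<in> V"
      have "q ?w z = (\<Sum>i\<in>I. q u (x i) * q (y i) z)"
        using F fin z by (intro qlin1) (auto simp: is_frame_def)
      also have "\<dots> = (\<Sum>i\<in>I. q z (y i) * q (x i) u)"
        using F z u by (intro sum.cong) (auto simp: is_frame_def qsym)
      also have "\<dots> = q z u" using frame_q[OF F z u] by simp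
      finally show "q u z = q ?w z" using qsym u z by simp
    qed }
  then show ?thesis using F unfolding is_frame_def by blast
qed

lemma frame_trace_aux:
  assumes f: "lin_on V f" and F1: "is_frame V q I x y" and F2: "is_frame V q J x' y'"
  shows "(\<Sum>i\<in>I. q (f (x i)) (y i)) = (\<Sum>j\<in>J. q (f (y' j)) (x' j))"
proof -
  have fI: "finite I" and fJ: "finite J" using F1 F2 by (auto simp: is_frame_def)
  have m1: "\<And>i. i \<in> I \<Longrightarrow> x i \<in> V \<and> y i \<in> V" and m2: "\<And>j. j \<in> J \<Longrightarrow> x' j \<in> V \<and> y' j \<in> V"
    using F1 F2 by (auto simp: is_frame_def)
  have fm: "\<And>v. v \<in> V \<Longrightarrow> f v \<in> V" using f by (simp add: lin_on_def)
  have "(\<Sum>i\<in>I. q (f (x i)) (y i)) = (\<Sum>i\<in>I. \<Sum>j\<in>J. q (y i) (y' j) * q (f (x i)) (x' j))"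
  proof (rule sum.cong[OF refl])
    fix i assume i: "i \<in> I"
    have "q (f (x i)) (y i) = q (f (x i)) (\<Sum>j\<in>J. q (y i) (y' j) *\<^sub>R x' j)"
      using frame_exp[OF F2, of "y i"] m1[OF i] by simp
    also have "\<dots> = (\<Sum>j\<in>J. q (y i) (y' j) * q (f (x i)) (x' j))"
      using fJ m2 fm m1[OF i] by (intro qlin2) auto
    finally show "q (f (x i)) (y i) = (\<Sum>j\<in>J. q (y i) (y' j) * q (f (x i)) (x' j))" .
  qed
  also have "\<dots> = (\<Sum>j\<in>J. \<Sum>i\<in>I. q (y' j) (y i) * q (f (x i)) (x' j))"
    by (subst sum.swap) (intro sum.cong refl, use m1 m2 qsym in auto)
  also have "\<dots> = (\<Sum>j\<in>J. q (f (y' j)) (x' j))"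
  proof (rule sum.cong[OF refl])
    fix j assume j: "j \<in> J"
    have "q (f (y' j)) (x' j) = q (f (\<Sum>i\<in>I. q (y' j) (y i) *\<^sub>R x i)) (x' j)"
      using frame_exp[OF F1, of "y' j"] m2[OF j] by simp
    also have "\<dots> = q (\<Sum>i\<in>I. q (y' j) (y i) *\<^sub>R f (x i)) (x' j)"
      using lin_on_sum[OF f sub fI, of x] m1 by simp
    also have "\<dots> = (\<Sum>i\<in>I. q (y' j) (y i) * q (f (x i)) (x' j))"
      using fI m1 fm m2[OF j] by (intro qlin1) auto
    finally show "(\<Sum>i\<in>I. q (y' j) (y i) * q (f (x i)) (x' j)) = q (f (y' j)) (x' j)" by simp
  qed
  finally show ?thesis .
qed

lemma frame_trace_indep:
  assumes f: "lin_on V f" and F1: "is_frame V q I x y" and F2: "is_frame V q J x' y'"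
  shows "(\<Sum>i\<in>I. q (f (x i)) (y i)) = (\<Sum>j\<in>J. q (f (x' j)) (y' j))"
  using frame_trace_aux[OF f F1 frame_swap[OF F2]] .

lemma dual_basis_exists:
  assumes B: "independent B" "span B = V"
  shows "\<exists>y. \<forall>c\<in>B. y c \<in> V \<and> (\<forall>b\<in>B. q b (y c) = (if b = c then 1 else 0))"
proof -
  have fB: "finite B" using B(1) by (rule independent_imp_finite)
  have BV: "B \<subseteq> V" using B(2) span_superset by blast
  define L where "L y = (\<Sum>c\<in>B. q c y *\<^sub>R c)" for y
  define f where "f = construct B L"
  have lf: "linear f" unfolding f_def by (rule linear_construct[OF B(1)])
  have fb: "f b = L b" if "b \<in> B" for b unfolding f_def by (rule construct_basis[OF B(1) that])
  have fL: "f y = L y" if y: "y \<in> V" for y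
  proof -
    have ysp: "y \<in> span B" using y B(2) by simp
    have ye: "y = (\<Sum>b\<in>B. representation B y b *\<^sub>R b)"
      using sum_representation_eq[OF B(1) ysp fB] by simp
    have "f y = (\<Sum>b\<in>B. representation B y b *\<^sub>R f b)"
      by (subst ye) (simp add: linear_sum[OF lf] linear_scale[OF lf])
    also have "\<dots> = (\<Sum>b\<in>B. representation B y b *\<^sub>R (\<Sum>c\<in>B. q c b *\<^sub>R c))"
      by (intro sum.cong refl) (simp add: fb L_def)
    also have "\<dots> = (\<Sum>c\<in>B. (\<Sum>b\<in>B. representation B y b * q c b) *\<^sub>R c)"
      unfolding scaleR_sum_right scaleR_sum_left scaleR_scaleR by (rule sum.swap)
    also have "\<dots> = (\<Sum>c\<in>B. q c y *\<^sub>R c)"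
    proof (intro sum.cong refl)
      fix c assume c: "c \<in> B"
      have "q c y = q c (\<Sum>b\<in>B. representation B y b *\<^sub>R b)" using ye by simp
      also have "\<dots> = (\<Sum>b\<in>B. representation B y b * q c b)"
        using fB BV c by (intro qlin2) auto
      finally show "(\<Sum>b\<in>B. representation B y b * q c b) *\<^sub>R c = q c y *\<^sub>R c" by simp
    qed
    finally show ?thesis by (simp add: L_def)
  qed
  have coef: "\<forall>c\<in>B. u c = w c" if "(\<Sum>c\<in>B. u c *\<^sub>R c) = (\<Sum>c\<in>B. w c *\<^sub>R c)" for u w
  proof -
    have "(\<Sum>c\<in>B. (u c - w c) *\<^sub>R c) = 0" using that by (simp add: scaleR_diff_left sum_subtractf)
    then show ?thesis using B(1) unfolding independent_explicit by auto
  qed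
  have inj: "inj_on f V"
  proof (rule inj_onI)
    fix y1 y2 assume y1: "y1 \<in> V" and y2: "y2 \<in> V" and eq: "f y1 = f y2"
    have "\<forall>c\<in>B. q c y1 = q c y2" using eq fL[OF y1] fL[OF y2] coef[of "\<lambda>c. q c y1" "\<lambda>c. q c y2"]
      by (simp add: L_def)
    then have z: "\<forall>c\<in>B. q c (y1 - y2) = 0" using y1 y2 BV by (auto simp: qdiff2)
    have "\<forall>u\<in>V. q u (y1 - y2) = 0"
    proof
      fix u assume u: "u \<in> V"
      have ue: "u = (\<Sum>b\<in>B. representation B u b *\<^sub>R b)"
        using sum_representation_eq[OF B(1) _ fB] u B(2) by simp
      have "q u (y1 - y2) = (\<Sum>b\<in>B. representation B u b * q b (y1 - y2))"
        by (subst ue, rule qlin1) (use fB BV y1 y2 sub in \<open>auto simp: subspace_diff\<close>)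
      then show "q u (y1 - y2) = 0" using z by simp
    qed
    then have "y1 - y2 = 0" using nondeg2[of "y1 - y2"] y1 y2 sub by (simp add: subspace_diff)
    then show "y1 = y2" by simp
  qed
  have img: "f ` V = V"
  proof (rule subspace_dim_equal)
    show "subspace (f ` V)" using lf sub by (rule linear_subspace_image)
    show "subspace V" by (rule sub)
    show "f ` V \<subseteq> V"
    proof
      fix z assume "z \<in> f ` V"
      then obtain y where y: "y \<in> V" "z = f y" by blast
      have "L y \<in> V" unfolding L_def using sub BV by (intro subspace_sum subspace_scale) auto
      then show "z \<in> V" using y fL by simp
    qed
    have "dim (f ` V) = dim V" using dim_image_eq[OF lf] inj span_eq_iff sub by metis
    then show "dim V \<le> dim (f ` V)" by simp
  qed
  have "\<forall>c\<in>B. \<exists>y\<in>V. \<forall>b\<in>B. q b y = (if b = c then 1 else 0)"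
  proof
    fix c assume c: "c \<in> B"
    then have "c \<in> f ` V" using img BV by auto
    then obtain y where y: "y \<in> V" "c = f y" by blast
    have d: "(\<Sum>b\<in>B. (if b = c then 1 else 0) *\<^sub>R b) = (\<Sum>b\<in>B. if b = c then c else 0)"
      by (intro sum.cong) auto
    have "(\<Sum>b\<in>B. q b y *\<^sub>R b) = (\<Sum>b\<in>B. (if b = c then 1 else 0) *\<^sub>R b)"
      unfolding d using y fL c fB by (simp add: L_def)
    then have "\<forall>b\<in>B. q b y = (if b = c then 1 else 0)" by (rule coef)
    then show "\<exists>y\<in>V. \<forall>b\<in>B. q b y = (if b = c then 1 else 0)" using y by blast
  qed
  then show ?thesis by metis
qed

lemma basis_frame:
  assumes B: "independent B" "span B = V"
  obtains y where "is_frame V q B id y" "\<And>u b. u \<in> V \<Longrightarrow> b \<in> B \<Longrightarrow> representation B u b = q u (y b)"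
proof -
  obtain y where y: "\<forall>c\<in>B. y c \<in> V \<and> (\<forall>b\<in>B. q b (y c) = (if b = c then 1 else 0))"
    using dual_basis_exists[OF B] by blast
  have fB: "finite B" using B(1) by (rule independent_imp_finite)
  have BV: "B \<subseteq> V" using B(2) span_superset by blast
  have rep: "representation B u c = q u (y c)" if u: "u \<in> V" and c: "c \<in> B" for u c
  proof -
    have ue: "u = (\<Sum>b\<in>B. representation B u b *\<^sub>R b)"
      using sum_representation_eq[OF B(1) _ fB] u B(2) by simp
    have "q u (y c) = (\<Sum>b\<in>B. representation B u b * q b (y c))"
      by (subst ue, rule qlin1) (use fB BV y c in auto)
    also have "\<dots> = (\<Sum>b\<in>B. if b = c then representation B u b else 0)"
      using y c by (intro sum.cong) auto
    also have "\<dots> = representation B u c" using c fB by simp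
    finally show ?thesis by simp
  qed
  have ex: "u = (\<Sum>b\<in>B. q u (y b) *\<^sub>R id b)" if u: "u \<in> V" for u
  proof -
    have "u = (\<Sum>b\<in>B. representation B u b *\<^sub>R b)"
      using sum_representation_eq[OF B(1) _ fB] u B(2) by simp
    also have "\<dots> = (\<Sum>b\<in>B. q u (y b) *\<^sub>R id b)" using rep u by (intro sum.cong) auto
    finally show ?thesis .
  qed
  have "is_frame V q B id y"
    unfolding is_frame_def using fB BV y ex by auto
  then show ?thesis using that rep by blast
qed

lemma basis_ex: "\<exists>B. B \<subseteq> V \<and> independent B \<and> span B = V"
proof -
  obtain B where "B \<subseteq> V" "independent B" "V \<subseteq> span B" by (rule maximal_independent_subset)
  moreover then have "span B \<subseteq> V" using sub span_minimal by blast
  ultimately show ?thesis by blast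
qed

lemma frame_ex: "\<exists>B (y::'a \<Rightarrow> 'a). is_frame V q B id y"
  using basis_ex basis_frame by metis

end

lemma trace_on_frame:
  fixes V :: "'a::euclidean_space set"
  assumes M: "metric_on V q" and f: "lin_on V f" and F: "is_frame V q I x y"
  shows "trace_on V f = (\<Sum>i\<in>I. q (f (x i)) (y i))"
proof -
  define B where "B = (SOME B. B \<subseteq> V \<and> independent B \<and> span B = V)"
  have B: "B \<subseteq> V \<and> independent B \<and> span B = V"
    unfolding B_def by (rule someI_ex) (rule basis_ex[OF M])
  obtain y0 where F0: "is_frame V q B id y0" and rep: "\<And>u b. u \<in> V \<Longrightarrow> b \<in> B \<Longrightarrow> representation B u b = q u (y0 b)"
    using basis_frame[OF M] B by metis
  have "trace_on V f = (\<Sum>b\<in>B. representation B (f b) b)"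
    unfolding trace_on_def B_def[symmetric] Let_def by simp
  also have "\<dots> = (\<Sum>b\<in>B. q (f (id b)) (y0 b))"
    using rep B f by (intro sum.cong) (auto simp: lin_on_def)
  also have "\<dots> = (\<Sum>i\<in>I. q (f (x i)) (y i))" by (rule frame_trace_indep[OF M f F0 F])
  finally show ?thesis .
qed


lemma mw: "linear f \<Longrightarrow> matrix f *v x = f (x::real^'n)"
  by (metis matrix_vector_mul(2))

lemma smv: "(c *\<^sub>R A) *v x = c *\<^sub>R (A *v (x::real^'n))" for A :: "real^'n^'m"
  by (simp add: scaleR_matrix_vector_assoc)

lemma mneg_r: "(A::real^'n^'m) ** (- B) = - (A ** B)"
  by (simp add: matrix_matrix_mult_def vec_eq_iff sum_negf)
lemma mneg_l: "(- A::real^'n^'m) ** B = - (A ** B)"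
  by (simp add: matrix_matrix_mult_def vec_eq_iff sum_negf)
lemma mdiff_r: "(A::real^'n^'m) ** (B - C) = A ** B - A ** C"
  by (simp add: matrix_matrix_mult_def vec_eq_iff sum_subtractf algebra_simps)
lemma mdiff_l: "((A::real^'n^'m) - B) ** C = A ** C - B ** C"
  by (simp add: matrix_matrix_mult_def vec_eq_iff sum_subtractf algebra_simps)
lemma madd_r: "(A::real^'n^'m) ** (B + C) = A ** B + A ** C"
  by (simp add: matrix_matrix_mult_def vec_eq_iff sum.distrib algebra_simps)
lemma madd_l: "((A::real^'n^'m) + B) ** C = A ** C + B ** C"
  by (simp add: matrix_matrix_mult_def vec_eq_iff sum.distrib algebra_simps)
lemma msc_l: "(c *\<^sub>R (A::real^'n^'m)) ** B = c *\<^sub>R (A ** B)"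
  by (simp add: scalar_matrix_assoc)
lemma msc_r: "(A::real^'n^'m) ** (c *\<^sub>R B) = c *\<^sub>R (A ** B)"
  by (simp add: matrix_scalar_ac scalar_matrix_assoc)
lemma trace_neg: "trace (- (A::real^'n^'n)) = - trace A"
  by (simp add: trace_def sum_negf)
lemma trace_scale: "trace (c *\<^sub>R (A::real^'n^'n)) = c * trace A"
  by (simp add: trace_def sum_distrib_left)
lemmas msimps = mneg_r mneg_l mdiff_r mdiff_l madd_r madd_l msc_l msc_r trace_neg trace_scale
  trace_add trace_sub

locale gmet =
  fixes br :: "real^'n \<Rightarrow> real^'n \<Rightarrow> real^'n" and q :: "real^'n \<Rightarrow> real^'n \<Rightarrow> real"
  assumes lie: "lie_algebra_on UNIV br" and met: "metric_on UNIV q"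
begin

lemma qs: "q x y = q y x" using qsym[OF met] by simp
lemma qa1: "q (x + y) z = q x z + q y z" using qadd1[OF met] by simp
lemma qa2: "q z (x + y) = q z x + q z y" using qadd2[OF met] by simp
lemma qc1: "q (c *\<^sub>R x) z = c * q x z" using qscale1[OF met] by simp
lemma qc2: "q z (c *\<^sub>R x) = c * q z x" using qscale2[OF met] by simp
lemma qz1: "q 0 z = 0" using q01[OF met] by simp
lemma qz2: "q z 0 = 0" using q02[OF met] by simp
lemma qn1: "q (- x) z = - q x z" using qneg1[OF met] by simp
lemma qn2: "q z (- x) = - q z x" using qneg2[OF met] by simp
lemma qd1: "q (x - y) z = q x z - q y z" using qdiff1[OF met] by simp
lemma qd2: "q z (x - y) = q z x - q z y" using qdiff2[OF met] by simp
lemma qsm1: "finite I \<Longrightarrow> q (\<Sum>i\<in>I. u i) z = (\<Sum>i\<in>I. q (u i) z)" using qsum1[OF met] by simp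
lemma qsm2: "finite I \<Longrightarrow> q z (\<Sum>i\<in>I. u i) = (\<Sum>i\<in>I. q z (u i))" using qsum2[OF met] by simp
lemmas qsimps = qa1 qa2 qc1 qc2 qz1 qz2 qn1 qn2 qd1 qd2

lemma q_ext: "(\<And>z. q x z = q x' z) \<Longrightarrow> x = x'" using q_eqI[OF met] by simp
lemma q_ext2: "(\<And>z. q z x = q z x') \<Longrightarrow> x = x'" using q_eqI2[OF met] by simp

lemma linear_q2: "linear (q z)"
  by (rule linearI) (simp_all add: qsimps)
lemma linear_q1: "linear (\<lambda>x. q x z)"
  by (rule linearI) (simp_all add: qsimps)

lemma bb: "bilinear_on UNIV br" using lie unfolding lie_algebra_on_def by blast
lemma ba1: "br (x + y) z = br x z + br y z"
  using bb[unfolded bilinear_on_def, rule_format, of x y z 0] by blast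
lemma ba2: "br z (x + y) = br z x + br z y"
  using bb[unfolded bilinear_on_def, rule_format, of x y z 0] by blast
lemma bc1: "br (c *\<^sub>R x) z = c *\<^sub>R br x z"
  using bb[unfolded bilinear_on_def, rule_format, of x x z c] by simp
lemma bc2: "br z (c *\<^sub>R x) = c *\<^sub>R br z x"
  using bb[unfolded bilinear_on_def, rule_format, of x x z c] by simp
lemma balt: "br x x = 0" using lie unfolding lie_algebra_on_def by blast
lemma jacobi: "br x (br y z) + br y (br z x) + br z (br x y) = 0"
  using lie unfolding lie_algebra_on_def by blast
lemma lin_br2: "linear (br x)" by (rule linearI) (simp_all add: ba2 bc2)
lemma lin_br1: "linear (\<lambda>x. br x y)" by (rule linearI) (simp_all add: ba1 bc1)
lemma bz1: "br 0 z = 0" using linear_0[OF lin_br1] by simp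
lemma bz2: "br z 0 = 0" using linear_0[OF lin_br2] by simp
lemma bn1: "br (- x) z = - br x z" using linear_neg[OF lin_br1] by simp
lemma bn2: "br z (- x) = - br z x" using linear_neg[OF lin_br2] by simp
lemma bd1: "br (x - y) z = br x z - br y z" using linear_diff[OF lin_br1] by simp
lemma bd2: "br z (x - y) = br z x - br z y" using linear_diff[OF lin_br2] by simp
lemma banti: "br y x = - br x y"
proof -
  have "0 = br (x + y) (x + y)" by (simp only: balt)
  also have "\<dots> = br x x + br y x + (br x y + br y y)" by (simp only: ba1 ba2)
  also have "\<dots> = br x y + br y x" by (simp only: balt) simp
  finally show ?thesis by (metis add.commute eq_neg_iff_add_eq_0)
qed
lemmas bsimps = ba1 ba2 bc1 bc2 bz1 bz2 bn1 bn2 bd1 bd2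

definition dual :: "real^'n \<Rightarrow> real^'n" where
  "dual = (SOME y. is_frame UNIV q Basis id y \<and>
      (\<forall>u b. b \<in> Basis \<longrightarrow> representation Basis u b = q u (y b)))"

lemma dual_prop: "is_frame UNIV q Basis id dual \<and>
      (\<forall>u b. b \<in> Basis \<longrightarrow> representation Basis u b = q u (dual b))"
proof -
  have "\<exists>y. is_frame UNIV q Basis id y \<and>
      (\<forall>u b. b \<in> Basis \<longrightarrow> representation Basis u b = q u (y b))"
  proof -
    obtain y where "is_frame UNIV q Basis id y" "\<And>u b. u \<in> UNIV \<Longrightarrow> b \<in> Basis \<Longrightarrow> representation Basis u b = q u (y b)"
      using basis_frame[OF met independent_Basis span_Basis] by blast
    then show ?thesis by blast
  qed
  then show ?thesis unfolding dual_def by (rule someI_ex)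
qed

lemma frame: "is_frame UNIV q Basis id dual" using dual_prop by blast
lemma q_dual: "b \<in> Basis \<Longrightarrow> q u (dual b) = inner u b"
  using dual_prop by (simp add: representation_euclidean_space)

lemma fexp: "u = (\<Sum>b\<in>Basis. q u (dual b) *\<^sub>R b)"
  using frame_exp[OF met frame, of u] by (simp only: id_apply UNIV_I)
lemma fq: "q u w = (\<Sum>b\<in>Basis. q u (dual b) * q b w)"
  using frame_q[OF met frame, of u w] by (simp only: id_apply UNIV_I)
lemma frame2: "is_frame UNIV q Basis dual id" using frame_swap[OF met frame] .
lemma fexp2: "u = (\<Sum>b\<in>Basis. q u b *\<^sub>R dual b)"
  using frame_exp[OF met frame2, of u] by (simp only: id_apply UNIV_I)
lemma fq2: "q u w = (\<Sum>b\<in>Basis. q u b * q (dual b) w)"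
  using frame_q[OF met frame2, of u w] by (simp only: id_apply UNIV_I)

lemma trace_basis: "trace (M::real^'n^'n) = (\<Sum>b\<in>Basis. inner (M *v b) b)"
proof -
  have "(\<Sum>b\<in>Basis. inner (M *v b) b) = (\<Sum>b\<in>(\<lambda>i. axis i (1::real)) ` UNIV. inner (M *v b) b)"
    by (rule sum.cong) (auto simp: Basis_vec_def)
  also have "\<dots> = (\<Sum>i\<in>UNIV. inner (M *v axis i 1) (axis i 1))"
    by (subst sum.reindex) (auto simp: inj_on_def axis_eq_axis)
  also have "\<dots> = trace M"
    unfolding trace_def by (intro sum.cong refl) (simp add: inner_axis matrix_vector_mult_basis column_def)
  finally show ?thesis by simp
qed

lemma tr_frame: "trace M = (\<Sum>b\<in>Basis. q (M *v b) (dual b))"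
  by (simp add: trace_basis q_dual)

lemma tr_frame2: "trace M = (\<Sum>b\<in>Basis. q (M *v dual b) b)"
proof -
  have l: "lin_on UNIV ((*v) M)" by (simp add: lin_on_def algebra_simps)
  show ?thesis using frame_trace_indep[OF met l frame frame2] tr_frame by simp
qed

lemma trace_on_mat: "linear (f::real^'n\<Rightarrow>real^'n) \<Longrightarrow> trace_on UNIV f = trace (matrix f)"
proof -
  assume lf: "linear f"
  have l: "lin_on UNIV f" using lf by (simp add: lin_on_def linear_add linear_scale)
  show ?thesis using trace_on_frame[OF met l frame] by (simp add: tr_frame mw[OF lf])
qed

section \<open>Adjoints\<close>

lemma adj_prop: "q (M *v u) v = q u (adj q M *v v)"
proof -
  define aw where "aw v = (\<Sum>b\<in>Basis. q (M *v b) v *\<^sub>R dual b)" for v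
  have la: "linear aw" unfolding aw_def
    by (rule linearI) (simp_all add: qsimps scaleR_add_left sum.distrib scaleR_sum_right)
  have p: "q (M *v u) v = q u (aw v)" for u v
  proof -
    have "q u (aw v) = (\<Sum>b\<in>Basis. q (M *v b) v * q u (dual b))"
      unfolding aw_def by (simp add: qsm2 qc2)
    also have "\<dots> = q (M *v (\<Sum>b\<in>Basis. q u (dual b) *\<^sub>R b)) v"
      by (simp add: matrix_vector_mult_scaleR qsm1 qc1 mult.commute vec.sum)
    also have "\<dots> = q (M *v u) v" using fexp[of u] by simp
    finally show ?thesis by simp
  qed
  have "(THE w. \<forall>x. q (M *v x) v = q x w) = aw v" for v
    by (rule the_equality) (auto simp: p intro: q_ext2)
  then have "adj q M = matrix aw" unfolding adj_def by simp
  then show ?thesis using p mw[OF la] by simp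
qed

lemma adj_prop2: "q (adj q M *v u) v = q u (M *v v)"
  using adj_prop[of M v u] qs by simp

lemma adj_unique: "(\<And>u v. q (M *v u) v = q u (N *v v)) \<Longrightarrow> adj q M = N"
  by (subst matrix_eq) (metis adj_prop q_ext2)

lemma adj_add: "adj q (M + N) = adj q M + adj q N"
  by (rule adj_unique) (simp add: algebra_simps qsimps adj_prop)
lemma adj_diff: "adj q (M - N) = adj q M - adj q N"
  by (rule adj_unique) (simp add: algebra_simps qsimps adj_prop)
lemma adj_scale: "adj q (c *\<^sub>R M) = c *\<^sub>R adj q M"
  by (rule adj_unique) (simp add: smv qsimps adj_prop)
lemma adj_neg: "adj q (- M) = - adj q M"
  using adj_scale[of "-1" M] by simp
lemma adj_mult: "adj q (M ** N) = adj q N ** adj q M"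
  by (rule adj_unique) (simp add: adj_prop matrix_vector_mul_assoc[symmetric])
lemma adj_adj: "adj q (adj q M) = M"
  by (rule adj_unique) (simp add: adj_prop2)
lemma adj_zero: "adj q 0 = 0"
  by (rule adj_unique) (simp add: qsimps)
lemma adj_id: "adj q (mat 1) = mat 1"
  by (rule adj_unique) simp

lemma tr_adj: "trace (adj q M) = trace M"
proof -
  have "trace (adj q M) = (\<Sum>b\<in>Basis. q (adj q M *v b) (dual b))" by (rule tr_frame)
  also have "\<dots> = (\<Sum>b\<in>Basis. q (M *v dual b) b)"
    by (intro sum.cong refl) (metis adj_prop2 qs)
  also have "\<dots> = trace M" by (simp add: tr_frame2)
  finally show ?thesis .
qed

lemma tr_skew_sym: "adj q K = - K \<Longrightarrow> adj q S = S \<Longrightarrow> trace (K ** S) = 0"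
proof -
  assume K: "adj q K = - K" and S: "adj q S = S"
  have "trace (K ** S) = trace (adj q (K ** S))" by (simp add: tr_adj)
  also have "\<dots> = trace (S ** (- K))" by (simp add: adj_mult K S)
  also have "\<dots> = - trace (K ** S)"
    by (simp add: trace_mul_sym[of S K] mneg_r trace_neg)
  finally show ?thesis by simp
qed

lemma tr_skew: "adj q K = - K \<Longrightarrow> trace K = 0"
  using tr_skew_sym[of K "mat 1"] by (simp add: adj_id)

end


lemma mvneg: "(- A) *v x = - (A *v (x::real^'n))" for A :: "real^'n^'m"
  by (simp add: matrix_vector_mult_def vec_eq_iff sum_negf)
lemma mvneg2: "A *v (- x) = - (A *v (x::real^'n))" for A :: "real^'n^'m"
  by (simp add: matrix_vector_mult_def vec_eq_iff sum_negf)
lemma half_id: "(1/2) *\<^sub>R (c - a - b) = (1/2) *\<^sub>R (- c - b - a) + (c::'a::real_vector)"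
proof -
  have "c = (1/2) *\<^sub>R c + (1/2) *\<^sub>R c" by (simp add: scaleR_add_left[symmetric])
  then show ?thesis by (simp add: algebra_simps)
qed

context gmet begin

definition ad :: "real^'n \<Rightarrow> real^'n^'n" where "ad x = matrix (br x)"
lemma ad_mv: "ad x *v y = br x y" unfolding ad_def by (rule mw[OF lin_br2])

lemma ad_add: "ad (x + y) = ad x + ad y"
  by (subst matrix_eq) (simp add: ad_mv algebra_simps ba1)
lemma ad_scale: "ad (c *\<^sub>R x) = c *\<^sub>R ad x"
  by (subst matrix_eq) (simp add: ad_mv smv bc1)
lemma ad_neg: "ad (- x) = - ad x"
  by (subst matrix_eq) (simp add: ad_mv bn1 mvneg)
lemma ad_diff: "ad (x - y) = ad x - ad y"
  by (subst matrix_eq) (simp add: ad_mv algebra_simps bd1)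
lemma ad_zero: "ad 0 = 0"
  by (subst matrix_eq) (simp add: ad_mv bz1)

definition J :: "real^'n \<Rightarrow> real^'n^'n" where "J x = matrix (\<lambda>y. adj q (ad y) *v x)"
lemma lin_J: "linear (\<lambda>y. adj q (ad y) *v x)"
  by (rule linearI) (simp_all add: ad_add adj_add ad_scale adj_scale smv algebra_simps)
lemma J_mv: "J x *v y = adj q (ad y) *v x" unfolding J_def by (rule mw[OF lin_J])
lemma J_add: "J (x + y) = J x + J y"
  by (subst matrix_eq) (simp add: J_mv algebra_simps)
lemma J_scale: "J (c *\<^sub>R x) = c *\<^sub>R J x"
  by (subst matrix_eq) (simp add: J_mv smv matrix_vector_mult_scaleR)
lemma J_q: "q (J x *v u) v = q x (br u v)"
  by (simp add: J_mv adj_prop2 ad_mv)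
lemma J_skew: "adj q (J x) = - J x"
proof (rule adj_unique)
  fix u v
  have "q (J x *v u) v = q x (br u v)" by (rule J_q)
  also have "\<dots> = - q x (br v u)" by (simp add: banti[of u v] qn2)
  also have "\<dots> = - q (J x *v v) u" by (simp add: J_q)
  also have "\<dots> = q u (- J x *v v)" by (simp add: qs[of u] qn2 mvneg)
  finally show "q (J x *v u) v = q u (- J x *v v)" .
qed

definition Kc :: "real^'n \<Rightarrow> real^'n^'n" where
  "Kc x = (1/2) *\<^sub>R (ad x - adj q (ad x) - J x)"

lemma kos: "2 * q (Kc x *v y) z = q (br x y) z - q (br y z) x + q (br z x) y"
proof -
  have "2 * q (Kc x *v y) z = q (br x y) z - q (adj q (ad x) *v y) z - q (adj q (ad y) *v x) z"
    unfolding Kc_def by (simp add: smv qsimps algebra_simps ad_mv J_mv)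
  also have "\<dots> = q (br x y) z - q (br y z) x + q (br z x) y"
    by (simp add: adj_prop2 ad_mv qs[of y] qs[of x] banti[of z x] qn1)
  finally show ?thesis .
qed

lemma lc_K: "lc_conn UNIV br q x y = Kc x *v y"
  unfolding lc_conn_def
proof (rule the_equality)
  show "Kc x *v y \<in> UNIV \<and> (\<forall>z\<in>UNIV. 2 * q (Kc x *v y) z = q (br x y) z - q (br y z) x + q (br z x) y)"
    using kos by simp
  fix w assume "w \<in> UNIV \<and> (\<forall>z\<in>UNIV. 2 * q w z = q (br x y) z - q (br y z) x + q (br z x) y)"
  then have "\<And>z. 2 * q w z = 2 * q (Kc x *v y) z" using kos by simp
  then show "w = Kc x *v y" by (intro q_ext) simp
qed

lemma Kc_add: "Kc (x + y) = Kc x + Kc y"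
  unfolding Kc_def by (simp add: ad_add adj_add J_add algebra_simps)
lemma Kc_scale: "Kc (c *\<^sub>R x) = c *\<^sub>R Kc x"
  unfolding Kc_def by (simp add: ad_scale adj_scale J_scale algebra_simps)
lemma Kc_skew: "adj q (Kc x) = - Kc x"
  unfolding Kc_def by (simp only: adj_scale adj_diff adj_adj J_skew) (simp add: algebra_simps)
lemma tr_Kc: "trace (Kc x) = 0" by (rule tr_skew[OF Kc_skew])

lemma torsion: "Kc x *v z = Kc z *v x + br x z"
proof -
  have 1: "Kc x *v z = (1/2) *\<^sub>R (br x z - adj q (ad x) *v z - adj q (ad z) *v x)"
    unfolding Kc_def by (simp add: smv matrix_vector_mult_diff_rdistrib ad_mv J_mv)
  have 2: "Kc z *v x = (1/2) *\<^sub>R (- br x z - adj q (ad z) *v x - adj q (ad x) *v z)"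
    unfolding Kc_def by (simp add: smv matrix_vector_mult_diff_rdistrib ad_mv J_mv banti[of z x])
  show ?thesis unfolding 1 2 by (rule half_id)
qed

definition Nc :: "real^'n \<Rightarrow> real^'n^'n" where "Nc z = Kc z - ad z"
lemma Nc_mv: "Nc z *v x = Kc x *v z"
  using torsion[of x z] by (simp add: Nc_def algebra_simps ad_mv banti[of z x])
lemma lc_N: "lc_conn UNIV br q x z = Nc z *v x" by (simp add: lc_K Nc_mv)

definition CM :: "real^'n \<Rightarrow> real^'n \<Rightarrow> real^'n^'n" where
  "CM v w = Nc (Kc v *v w) - Kc v ** Nc w + Nc w ** ad v"

lemma curv_CM: "curv UNIV br q u v w = CM v w *v u"
proof -
  have "curv UNIV br q u v w = Nc (Kc v *v w) *v u - Kc v *v (Nc w *v u) - Nc w *v br u v"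
    unfolding curv_def by (simp add: lc_K Nc_mv)
  also have "\<dots> = CM v w *v u"
    unfolding CM_def by (simp add: algebra_simps matrix_vector_mul_assoc[symmetric] ad_mv banti[of u v] mvneg2)
  finally show ?thesis .
qed

lemma ric_CM: "ricci_tensor UNIV br q v w = trace (CM v w)"
proof -
  have "ricci_tensor UNIV br q v w = trace_on UNIV ((*v) (CM v w))"
    unfolding ricci_tensor_def by (simp add: curv_CM)
  also have "\<dots> = trace (CM v w)" by (simp add: trace_on_mat)
  finally show ?thesis .
qed

lemma ric_K:
  assumes unimod: "\<And>z. trace (ad z) = 0"
  shows "ricci_tensor UNIV br q v w =
    - trace (Kc v ** Kc w) + trace (Kc v ** ad w) + trace (Kc w ** ad v) - trace (ad w ** ad v)"
  unfolding ric_CM CM_def Nc_def by (simp add: msimps tr_Kc unimod)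

lemma ric_closed:
  assumes unimod: "\<And>z. trace (ad z) = 0"
  shows "ricci_tensor UNIV br q v w =
    - (1/2) * trace (ad v ** ad w) - (1/2) * trace (adj q (ad w) ** ad v) - (1/4) * trace (J v ** J w)"
proof -
  define a where "a = ad v"
  define b where "b = ad w"
  define j where "j = J v"
  define k where "k = J w"
  have e1: "trace (adj q a ** adj q b) = trace (a ** b)"
    by (metis adj_mult tr_adj trace_mul_sym)
  have e2: "trace (adj q a ** k) = - trace (a ** k)"
  proof -
    have "trace (adj q a ** k) = trace (adj q (adj q k ** a))" by (simp add: adj_mult adj_adj)
    also have "\<dots> = trace (adj q k ** a)" by (rule tr_adj)
    also have "\<dots> = - trace (a ** k)" unfolding k_def by (simp add: J_skew msimps trace_mul_sym[of "J w" a])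
    finally show ?thesis .
  qed
  have e3: "trace (j ** adj q b) = - trace (j ** b)"
  proof -
    have "trace (j ** adj q b) = trace (adj q (b ** adj q j))" by (simp add: adj_mult adj_adj)
    also have "\<dots> = trace (b ** adj q j)" by (rule tr_adj)
    also have "\<dots> = - trace (j ** b)" unfolding j_def by (simp add: J_skew msimps trace_mul_sym[of b "J v"])
    finally show ?thesis .
  qed
  have e4: "trace (a ** adj q b) = trace (adj q b ** a)" by (rule trace_mul_sym)
  have e5: "trace (adj q a ** b) = trace (adj q b ** a)"
    by (metis adj_mult adj_adj tr_adj)
  have e6: "trace (k ** a) = trace (a ** k)" by (rule trace_mul_sym)
  have e7: "trace (b ** a) = trace (a ** b)" by (rule trace_mul_sym)
  have e8: "trace (b ** j) = trace (j ** b)" by (rule trace_mul_sym)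
  have "ricci_tensor UNIV br q v w =
    - trace (Kc v ** Kc w) + trace (Kc v ** ad w) + trace (Kc w ** ad v) - trace (ad w ** ad v)"
    by (rule ric_K[OF unimod])
  also have "\<dots> = - (1/2) * trace (a ** b) - (1/2) * trace (adj q b ** a) - (1/4) * trace (j ** k)"
    unfolding Kc_def a_def[symmetric] b_def[symmetric] j_def[symmetric] k_def[symmetric]
    by (simp add: msimps e1 e2 e3 e4 e5 e6 e7 e8 algebra_simps)
  finally show ?thesis by (simp add: a_def b_def j_def k_def)
qed

end


context gmet begin

abbreviation LC where "LC k \<equiv> lower_central UNIV br k"

lemma LC_sub: "subspace (LC k)"
  by (cases k) (simp_all add: subspace_UNIV subspace_span)

lemma LC_gen: "y \<in> LC k \<Longrightarrow> br x y \<in> LC (Suc k)"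
  by (auto intro: span_base)

lemma LC_mono: "LC (Suc k) \<subseteq> LC k"
proof (induction k)
  case 0 then show ?case by simp
next
  case (Suc k)
  have "{br x y |x y. x \<in> UNIV \<and> y \<in> LC (Suc k)} \<subseteq> {br x y |x y. x \<in> UNIV \<and> y \<in> LC k}"
    using Suc by blast
  then show ?case by (simp add: span_mono)
qed

lemma LC_anti: "m \<le> k \<Longrightarrow> LC k \<subseteq> LC m"
proof (induction k)
  case 0 then show ?case by simp
next
  case (Suc k)
  then show ?case using LC_mono[of k] by (cases "m = Suc k") auto
qed

lemma der_lin: "S \<in> derivations br \<Longrightarrow> S *v br x y = br (S *v x) y + br x (S *v y)"
  unfolding derivations_def by blast

lemma der_pres: assumes S: "S \<in> derivations br" shows "y \<in> LC k \<Longrightarrow> S *v y \<in> LC k"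
proof (induction k arbitrary: y)
  case 0 then show ?case by simp
next
  case (Suc k)
  let ?G = "{br x y |x y. x \<in> UNIV \<and> y \<in> LC k}"
  have "?G \<subseteq> (\<lambda>y. S *v y) -` LC (Suc k)"
  proof
    fix g assume "g \<in> ?G"
    then obtain x y' where g: "g = br x y'" "y' \<in> LC k" by blast
    have "S *v g = br (S *v x) y' + br x (S *v y')" using der_lin[OF S] g by simp
    moreover have "br (S *v x) y' \<in> LC (Suc k)" using g LC_gen by blast
    moreover have "br x (S *v y') \<in> LC (Suc k)" using Suc.IH[OF g(2)] LC_gen by blast
    ultimately show "g \<in> (\<lambda>y. S *v y) -` LC (Suc k)"
      using LC_sub[of "Suc k"] by (simp add: subspace_add)
  qed
  moreover have "subspace ((\<lambda>y. S *v y) -` LC (Suc k))"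
    by (rule linear_subspace_vimage) (simp_all add: LC_sub)
  ultimately have "span ?G \<subseteq> (\<lambda>y. S *v y) -` LC (Suc k)" by (rule span_minimal)
  then show ?case using Suc.prems by auto
qed

lemma trace_basis_any:
  fixes C :: "(real^'n) set"
  assumes C: "independent C" "span C = UNIV"
  shows "trace M = (\<Sum>b\<in>C. representation C (M *v b) b)"
proof -
  obtain y where F: "is_frame UNIV q C id y" and rep: "\<And>u b. u \<in> UNIV \<Longrightarrow> b \<in> C \<Longrightarrow> representation C u b = q u (y b)"
    using basis_frame[OF met C] by blast
  have l: "lin_on UNIV ((*v) M)" by (simp add: lin_on_def algebra_simps)
  have "trace M = trace_on UNIV ((*v) M)" by (simp add: trace_on_mat)
  also have "\<dots> = (\<Sum>b\<in>C. q (M *v b) (y b))" using trace_on_frame[OF met l F] by simp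
  also have "\<dots> = (\<Sum>b\<in>C. representation C (M *v b) b)" using rep by simp
  finally show ?thesis .
qed

lemma adapted_basis:
  assumes N: "LC N \<subseteq> {0}"
  shows "m \<le> N \<Longrightarrow> \<exists>C lv. independent C \<and> span C = LC (N - m) \<and> (\<forall>b\<in>C. N - m \<le> lv b) \<and>
     (\<forall>k. N - m \<le> k \<longrightarrow> span {b\<in>C. k \<le> lv b} = LC k)"
proof (induction m)
  case 0
  have "LC k = {0}" if "N \<le> k" for k
    using LC_anti[OF that] N subspace_0[OF LC_sub[of k]] by auto
  then show ?case by (intro exI[of _ "{}"]) (auto simp: independent_empty)
next
  case (Suc m)
  then obtain C lv where C: "independent C" "span C = LC (N - m)" "\<forall>b\<in>C. N - m \<le> lv b"
     "\<forall>k. N - m \<le> k \<longrightarrow> span {b\<in>C. k \<le> lv b} = LC k" by auto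
  define l where "l = N - Suc m"
  have lm: "N - m = Suc l" using Suc.prems unfolding l_def by simp
  have CV: "C \<subseteq> LC l" using C(2) span_superset LC_mono[of l] lm by auto
  obtain C' where C': "C \<subseteq> C'" "C' \<subseteq> LC l" "independent C'" "LC l \<subseteq> span C'"
    using maximal_independent_subset_extend[OF CV C(1)] by blast
  have sC': "span C' = LC l" using C' span_minimal[OF C'(2) LC_sub] by auto
  define lv' where "lv' b = (if b \<in> C then lv b else l)" for b
  show ?case unfolding l_def[symmetric]
  proof (intro exI[of _ C'] exI[of _ lv'] conjI allI impI ballI)
    show "independent C'" by fact
    show "span C' = LC l" by fact
    show "l \<le> lv' b" if "b \<in> C'" for b using C(3) lm by (auto simp: lv'_def)
    fix k assume k: "l \<le> k"
    show "span {b \<in> C'. k \<le> lv' b} = LC k"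
    proof (cases "k = l")
      case True
      have "{b \<in> C'. k \<le> lv' b} = C'" using C(3) lm True by (auto simp: lv'_def)
      then show ?thesis using sC' True by simp
    next
      case False
      then have "{b \<in> C'. k \<le> lv' b} = {b\<in>C. k \<le> lv b}" using k C'(1) by (auto simp: lv'_def)
      then show ?thesis using C(4) k False lm by simp
    qed
  qed
qed

lemma trace_shift_zero:
  assumes nil: "nilpotent_lie UNIV br"
    and sh: "\<And>k y. y \<in> LC k \<Longrightarrow> M *v y \<in> LC (Suc k)"
  shows "trace M = 0"
proof -
  obtain N where N: "LC N \<subseteq> {0}" using nil unfolding nilpotent_lie_def by blast
  obtain C lv where C: "independent C" "span C = LC 0" "\<forall>k. 0 \<le> k \<longrightarrow> span {b\<in>C. k \<le> lv b} = LC k"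
    using adapted_basis[OF N, of N] by auto
  have CU: "span C = UNIV" using C(2) by simp
  have "trace M = (\<Sum>b\<in>C. representation C (M *v b) b)" by (rule trace_basis_any[OF C(1) CU])
  also have "\<dots> = 0"
  proof (rule sum.neutral, rule ballI)
    fix b assume b: "b \<in> C"
    define C1 where "C1 = {b'\<in>C. Suc (lv b) \<le> lv b'}"
    have "b \<in> span {b'\<in>C. lv b \<le> lv b'}" using b by (intro span_base) auto
    then have "b \<in> LC (lv b)" using C(3) by auto
    then have "M *v b \<in> LC (Suc (lv b))" by (rule sh)
    then have Mb: "M *v b \<in> span C1" using C(3) unfolding C1_def by auto
    have "representation C (M *v b) = representation C1 (M *v b)"
      by (rule representation_extend[OF C(1) Mb]) (auto simp: C1_def)
    moreover have "representation C1 (M *v b) b = 0"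
      using representation_ne_zero[of C1 "M *v b" b] unfolding C1_def by auto
    ultimately show "representation C (M *v b) b = 0" by simp
  qed
  finally show ?thesis .
qed

lemma unimod: assumes nil: "nilpotent_lie UNIV br" shows "trace (ad z) = 0"
proof (rule trace_shift_zero[OF nil])
  fix k y assume "y \<in> LC k"
  then have "br z y \<in> LC (Suc k)" by (rule LC_gen)
  then show "ad z *v y \<in> LC (Suc k)" by (simp only: ad_mv)
qed

lemma killing: assumes nil: "nilpotent_lie UNIV br" shows "trace (ad u ** ad v) = 0"
proof (rule trace_shift_zero[OF nil])
  fix k y assume "y \<in> LC k"
  then have "br u (br v y) \<in> LC (Suc (Suc k))" by (intro LC_gen)
  then have "br u (br v y) \<in> LC (Suc k)" using LC_mono[of "Suc k"] by blast
  then show "(ad u ** ad v) *v y \<in> LC (Suc k)"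
    by (simp only: ad_mv matrix_vector_mul_assoc[symmetric])
qed

lemma tr_ad_der: assumes nil: "nilpotent_lie UNIV br" and S: "S \<in> derivations br"
  shows "trace (ad z ** S) = 0"
proof (rule trace_shift_zero[OF nil])
  fix k y assume "y \<in> LC k"
  then have "S *v y \<in> LC k" by (rule der_pres[OF S])
  then have "br z (S *v y) \<in> LC (Suc k)" by (rule LC_gen)
  then show "(ad z ** S) *v y \<in> LC (Suc k)"
    by (simp only: ad_mv matrix_vector_mul_assoc[symmetric])
qed

end


context gmet begin

lemma fexp_s: "(\<Sum>b\<in>Basis. q u (dual b) *\<^sub>R b) = u" using fexp[of u] by (rule sym)

lemma Nc_add: "Nc (x + y) = Nc x + Nc y"
  unfolding Nc_def by (simp add: Kc_add ad_add algebra_simps)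
lemma Nc_scale: "Nc (c *\<^sub>R x) = c *\<^sub>R Nc x"
  unfolding Nc_def by (simp add: Kc_scale ad_scale algebra_simps)

lemma ric_lin2: "linear (ricci_tensor UNIV br q v)"
proof (rule linearI)
  fix a b :: "real^'n" and c :: real
  show "ricci_tensor UNIV br q v (a + b) = ricci_tensor UNIV br q v a + ricci_tensor UNIV br q v b"
    unfolding ric_CM CM_def by (simp add: matrix_vector_right_distrib Nc_add msimps)
  show "ricci_tensor UNIV br q v (c *\<^sub>R b) = c *\<^sub>R ricci_tensor UNIV br q v b"
    unfolding ric_CM CM_def by (simp add: matrix_vector_mult_scaleR Nc_scale msimps algebra_simps)
qed

lemma ric_op_tensor:
  assumes "ricci_op UNIV br q x = w"
  shows "ricci_tensor UNIV br q x z = q w z"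
proof -
  define w0 where "w0 = (\<Sum>b\<in>Basis. ricci_tensor UNIV br q x b *\<^sub>R dual b)"
  have p: "q w0 z = ricci_tensor UNIV br q x z" for z
  proof -
    have "q w0 z = (\<Sum>b\<in>Basis. ricci_tensor UNIV br q x b * q (dual b) z)"
      unfolding w0_def by (simp add: qsm1 qc1)
    also have "\<dots> = (\<Sum>b\<in>Basis. q z (dual b) * ricci_tensor UNIV br q x b)"
      by (simp add: qs mult.commute)
    also have "\<dots> = ricci_tensor UNIV br q x (\<Sum>b\<in>Basis. q z (dual b) *\<^sub>R b)"
      using ric_lin2[of x] by (simp add: linear_sum linear_scale)
    also have "\<dots> = ricci_tensor UNIV br q x z" by (simp only: fexp_s)
    finally show ?thesis .
  qed
  have "ricci_op UNIV br q x = w0"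
    unfolding ricci_op_def
  proof (rule the_equality)
    show "w0 \<in> UNIV \<and> (\<forall>z\<in>UNIV. q w0 z = ricci_tensor UNIV br q x z)" using p by simp
    fix w' assume "w' \<in> UNIV \<and> (\<forall>z\<in>UNIV. q w' z = ricci_tensor UNIV br q x z)"
    then show "w' = w0" using p by (intro q_ext) simp
  qed
  then show ?thesis using assms p by simp
qed

lemma fsym:
  fixes F :: "real^'n \<Rightarrow> real^'n \<Rightarrow> real"
  assumes l1: "\<And>u. linear (F u)" and l2: "\<And>v. linear (\<lambda>u. F u v)"
  shows "(\<Sum>j\<in>Basis. F (dual j) j) = (\<Sum>j\<in>Basis. F j (dual j))"
proof -
  have "(\<Sum>j\<in>Basis. F (dual j) j) = (\<Sum>j\<in>Basis. \<Sum>l\<in>Basis. q (dual j) (dual l) * F l j)"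
  proof (rule sum.cong[OF refl])
    fix j
    have "F (dual j) j = F (\<Sum>l\<in>Basis. q (dual j) (dual l) *\<^sub>R l) j" by (simp only: fexp_s)
    also have "\<dots> = (\<Sum>l\<in>Basis. q (dual j) (dual l) * F l j)"
      by (simp add: linear_sum[OF l2[of j]] linear_scale[OF l2[of j]] real_scaleR_def)
    finally show "F (dual j) j = (\<Sum>l\<in>Basis. q (dual j) (dual l) * F l j)" .
  qed
  also have "\<dots> = (\<Sum>l\<in>Basis. \<Sum>j\<in>Basis. q (dual l) (dual j) * F l j)"
    by (subst sum.swap) (simp add: qs)
  also have "\<dots> = (\<Sum>l\<in>Basis. F l (dual l))"
  proof (rule sum.cong[OF refl])
    fix l
    have "F l (dual l) = F l (\<Sum>j\<in>Basis. q (dual l) (dual j) *\<^sub>R j)" by (simp only: fexp_s)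
    also have "\<dots> = (\<Sum>j\<in>Basis. q (dual l) (dual j) * F l j)"
      by (simp add: linear_sum[OF l1[of l]] linear_scale[OF l1[of l]] real_scaleR_def)
    finally show "(\<Sum>j\<in>Basis. q (dual l) (dual j) * F l j) = F l (dual l)" by simp
  qed
  finally show ?thesis .
qed

lemma Esum: "(\<Sum>k\<in>Basis. q (dual k) u * q (E *v k) w) = q (E *v u) w"
proof -
  have "q (E *v u) w = q (E *v (\<Sum>k\<in>Basis. q u (dual k) *\<^sub>R k)) w" by (simp only: fexp_s)
  also have "\<dots> = (\<Sum>k\<in>Basis. q u (dual k) * q (E *v k) w)"
    by (simp add: vec.sum matrix_vector_mult_scaleR qsm1 qc1)
  finally show ?thesis by (simp add: qs)
qed

lemma Tq: "trace (adj q (ad c) ** ad a) = (\<Sum>i\<in>Basis. q (br a i) (br c (dual i)))"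
  by (simp add: tr_frame matrix_vector_mul_assoc[symmetric] adj_prop2 ad_mv)

lemma Jq: "trace (J a ** J c) = - (\<Sum>i\<in>Basis. \<Sum>j\<in>Basis. q c (br i (dual j)) * q a (br (dual i) j))"
proof -
  have "trace (J a ** J c) = (\<Sum>i\<in>Basis. q (J a *v (J c *v i)) (dual i))"
    by (simp add: tr_frame matrix_vector_mul_assoc[symmetric])
  also have "\<dots> = (\<Sum>i\<in>Basis. - q (J c *v i) (J a *v dual i))"
    by (simp add: adj_prop2[symmetric] J_skew mvneg qn1)
  also have "\<dots> = (\<Sum>i\<in>Basis. - (\<Sum>j\<in>Basis. q c (br i (dual j)) * q a (br (dual i) j)))"
  proof (rule sum.cong[OF refl])
    fix i
    have "q (J c *v i) (J a *v dual i) = (\<Sum>j\<in>Basis. q (J c *v i) (dual j) * q j (J a *v dual i))"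
      by (rule fq)
    also have "\<dots> = (\<Sum>j\<in>Basis. q c (br i (dual j)) * q a (br (dual i) j))"
      by (intro sum.cong refl) (metis J_q qs)
    finally show "- q (J c *v i) (J a *v dual i) = - (\<Sum>j\<in>Basis. q c (br i (dual j)) * q a (br (dual i) j))"
      by simp
  qed
  finally show ?thesis by (simp add: sum_negf)
qed

lemma tr_ric_der:
  assumes nil: "nilpotent_lie UNIV br" and E: "E \<in> derivations br"
  shows "(\<Sum>k\<in>Basis. ricci_tensor UNIV br q (E *v k) (dual k)) = 0"
proof -
  note um = unimod[OF nil]
  define P where "P = (\<Sum>i\<in>Basis. \<Sum>j\<in>Basis. q (E *v br i j) (br (dual i) (dual j)))"
  define S1 where "S1 = (\<Sum>k\<in>Basis. trace (adj q (ad (dual k)) ** ad (E *v k)))"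
  define S2 where "S2 = (\<Sum>k\<in>Basis. trace (J (E *v k) ** J (dual k)))"
  have ric: "(\<Sum>k\<in>Basis. ricci_tensor UNIV br q (E *v k) (dual k)) = - (1/2) * S1 - (1/4) * S2"
    unfolding S1_def S2_def
    by (simp add: ric_closed[OF um] killing[OF nil] sum_subtractf sum_distrib_left sum_negf)
  have S1e: "S1 = (\<Sum>i\<in>Basis. \<Sum>j\<in>Basis. q (br (E *v i) j) (br (dual i) (dual j)))"
    unfolding S1_def by (simp add: Tq)
  have P2: "P = 2 * S1"
  proof -
    have "P = (\<Sum>i\<in>Basis. \<Sum>j\<in>Basis. q (br (E *v i) j) (br (dual i) (dual j)))
            + (\<Sum>i\<in>Basis. \<Sum>j\<in>Basis. q (br i (E *v j)) (br (dual i) (dual j)))"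
      unfolding P_def by (simp add: der_lin[OF E] qa1 sum.distrib)
    also have "(\<Sum>i\<in>Basis. \<Sum>j\<in>Basis. q (br i (E *v j)) (br (dual i) (dual j)))
        = (\<Sum>i\<in>Basis. \<Sum>j\<in>Basis. q (br (E *v j) i) (br (dual j) (dual i)))"
    proof (intro sum.cong refl)
      fix i j
      have a: "br i (E *v j) = - br (E *v j) i" by (rule banti)
      have b: "br (dual i) (dual j) = - br (dual j) (dual i)" by (rule banti)
      show "q (br i (E *v j)) (br (dual i) (dual j)) = q (br (E *v j) i) (br (dual j) (dual i))"
        unfolding a b by (simp add: qn1 qn2)
    qed
    also have "\<dots> = (\<Sum>j\<in>Basis. \<Sum>i\<in>Basis. q (br (E *v j) i) (br (dual j) (dual i)))"
      by (rule sum.swap)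
    finally show ?thesis using S1e by simp
  qed
  have S2e: "S2 = - (\<Sum>i\<in>Basis. \<Sum>j\<in>Basis. q (E *v br i (dual j)) (br (dual i) j))"
  proof -
    have "S2 = - (\<Sum>k\<in>Basis. \<Sum>i\<in>Basis. \<Sum>j\<in>Basis. q (dual k) (br i (dual j)) * q (E *v k) (br (dual i) j))"
      unfolding S2_def by (simp add: Jq sum_negf)
    also have "(\<Sum>k\<in>Basis. \<Sum>i\<in>Basis. \<Sum>j\<in>Basis. q (dual k) (br i (dual j)) * q (E *v k) (br (dual i) j))
        = (\<Sum>i\<in>Basis. \<Sum>j\<in>Basis. \<Sum>k\<in>Basis. q (dual k) (br i (dual j)) * q (E *v k) (br (dual i) j))"
      by (subst sum.swap) (subst (2) sum.swap, rule refl)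
    also have "\<dots> = (\<Sum>i\<in>Basis. \<Sum>j\<in>Basis. q (E *v br i (dual j)) (br (dual i) j))"
      by (simp add: Esum)
    finally show ?thesis .
  qed
  have S2P: "S2 = - P"
  proof -
    have "(\<Sum>j\<in>Basis. q (E *v br i (dual j)) (br (dual i) j)) = (\<Sum>j\<in>Basis. q (E *v br i j) (br (dual i) (dual j)))" for i
    proof -
      let ?F = "\<lambda>u v. q (E *v br i u) (br (dual i) v)"
      have l1: "linear (?F u)" for u
        by (rule linearI) (simp_all add: bsimps qsimps)
      have l2: "linear (\<lambda>u. ?F u v)" for v
        by (rule linearI) (simp_all add: bsimps qsimps algebra_simps matrix_vector_mult_scaleR)
      show ?thesis using fsym[of ?F, OF l1 l2] by simp
    qed
    then show ?thesis unfolding S2e P_def by simp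
  qed
  show ?thesis using ric P2 S2P by simp
qed

end


lemma mv_sum_l: "(\<Sum>i\<in>I. M i) *v x = (\<Sum>i\<in>I. M i *v (x::real^'n))" for M :: "'i \<Rightarrow> real^'n^'m"
  by (induction I rule: infinite_finite_induct) (simp_all add: matrix_vector_mult_add_rdistrib)

locale sdp = gmet br q for br :: "real^'n \<Rightarrow> real^'n \<Rightarrow> real^'n" and q +
  fixes B :: "'b::euclidean_space set" and Q :: "'b \<Rightarrow> 'b \<Rightarrow> real" and \<phi> :: "'b \<Rightarrow> real^'n^'n"
    and H0 :: 'b
    and brt :: "((real^'n) \<times> 'b) \<Rightarrow> ((real^'n) \<times> 'b) \<Rightarrow> ((real^'n) \<times> 'b)"
    and qt :: "((real^'n) \<times> 'b) \<Rightarrow> ((real^'n) \<times> 'b) \<Rightarrow> real"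
  assumes metQ: "metric_on B Q"
    and phi_add: "X \<in> B \<Longrightarrow> Y \<in> B \<Longrightarrow> \<phi> (X + Y) = \<phi> X + \<phi> Y"
    and phi_scale: "X \<in> B \<Longrightarrow> \<phi> (c *\<^sub>R X) = c *\<^sub>R \<phi> X"
    and nil: "nilpotent_lie UNIV br"
    and Sder: "X \<in> B \<Longrightarrow> sym_part q (\<phi> X) \<in> derivations br"
    and comm: "X \<in> B \<Longrightarrow> Y \<in> B \<Longrightarrow> \<phi> X ** sym_part q (\<phi> Y) = sym_part q (\<phi> Y) ** \<phi> X"
    and H0B: "H0 \<in> B" and H0tr: "Y \<in> B \<Longrightarrow> Q H0 Y = trace (\<phi> Y)"
    and brt_eq: "X \<in> B \<Longrightarrow> Y \<in> B \<Longrightarrow> brt (v, X) (w, Y) = (br v w + \<phi> X *v w - \<phi> Y *v v, 0)"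
    and qt_eq: "X \<in> B \<Longrightarrow> Y \<in> B \<Longrightarrow> qt (v, X) (w, Y) = q v w + Q X Y"
begin

lemma subB: "subspace B" using sub[OF metQ] .
lemma zB: "0 \<in> B" using subB by (rule subspace_0)
lemma addB: "X \<in> B \<Longrightarrow> Y \<in> B \<Longrightarrow> X + Y \<in> B" using subB by (rule subspace_add)
lemma scB: "X \<in> B \<Longrightarrow> c *\<^sub>R X \<in> B" using subB by (rule subspace_scale)
lemma diffB: "X \<in> B \<Longrightarrow> Y \<in> B \<Longrightarrow> X - Y \<in> B" using subB by (rule subspace_diff)
lemma negB: "X \<in> B \<Longrightarrow> - X \<in> B" using subB by (rule subspace_neg)

lemma phi0: "\<phi> 0 = 0" using phi_scale[OF zB, of 0] by simp

definition S where "S X = sym_part q (\<phi> X)"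
definition A where "A X = \<phi> X - S X"

lemma S_def2: "S X = (1/2) *\<^sub>R (\<phi> X + adj q (\<phi> X))" unfolding S_def sym_part_def by simp
lemma S_add: "X \<in> B \<Longrightarrow> Y \<in> B \<Longrightarrow> S (X + Y) = S X + S Y"
  unfolding S_def2 by (simp add: phi_add adj_add algebra_simps)
lemma S_scale: "X \<in> B \<Longrightarrow> S (c *\<^sub>R X) = c *\<^sub>R S X"
  unfolding S_def2 by (simp add: phi_scale adj_scale algebra_simps)
lemma S0: "S 0 = 0" unfolding S_def2 by (simp add: phi0 adj_zero)
lemma A0: "A 0 = 0" unfolding A_def by (simp add: phi0 S0)
lemma A_add: "X \<in> B \<Longrightarrow> Y \<in> B \<Longrightarrow> A (X + Y) = A X + A Y"
  unfolding A_def by (simp add: phi_add S_add algebra_simps)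
lemma A_scale: "X \<in> B \<Longrightarrow> A (c *\<^sub>R X) = c *\<^sub>R A X"
  unfolding A_def by (simp add: phi_scale S_scale algebra_simps)
lemma S_adj: "adj q (S X) = S X"
  unfolding S_def2 by (simp add: adj_scale adj_add adj_adj algebra_simps)
lemma half_sub: "x - (1/2) *\<^sub>R (x + y) = (1/2) *\<^sub>R (x - y)" for x y :: "'c::real_vector"
proof -
  have "x = (1/2) *\<^sub>R x + (1/2) *\<^sub>R x" by (simp add: scaleR_add_left[symmetric])
  then show ?thesis by (simp add: algebra_simps)
qed
lemma A_def2: "A X = (1/2) *\<^sub>R (\<phi> X - adj q (\<phi> X))"
  unfolding A_def S_def2 by (rule half_sub)
lemma A_adj: "adj q (A X) = - A X"
  unfolding A_def2 by (simp add: adj_scale adj_diff adj_adj scaleR_minus_right[symmetric])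
lemma trS: "trace (S X) = trace (\<phi> X)"
  unfolding S_def2 by (simp add: msimps tr_adj)
lemma qS: "q (S X *v a) b = (1/2) * (q (\<phi> X *v a) b + q a (\<phi> X *v b))"
  unfolding S_def2 by (simp add: smv qsimps algebra_simps adj_prop2)
lemma qA: "q (A X *v a) b = (1/2) * (q (\<phi> X *v a) b - q a (\<phi> X *v b))"
  unfolding A_def S_def2 by (simp add: smv qsimps algebra_simps adj_prop2)
lemma qS2: "q a (S X *v b) = q (S X *v a) b" using adj_prop[of "S X" a b] by (simp add: S_adj)
lemma qA2: "q a (A X *v b) = - q (A X *v a) b" using adj_prop[of "A X" a b] by (simp add: A_adj mvneg qn2)

lemma S_sum: "finite I \<Longrightarrow> (\<And>i. i \<in> I \<Longrightarrow> u i \<in> B) \<Longrightarrow> S (\<Sum>i\<in>I. c i *\<^sub>R u i) = (\<Sum>i\<in>I. c i *\<^sub>R S (u i))"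
proof (induction I rule: finite_induct)
  case empty then show ?case by (simp add: S0)
next
  case (insert a F)
  have "(\<Sum>i\<in>F. c i *\<^sub>R u i) \<in> B" using insert subB by (intro subspace_sum subspace_scale) auto
  then show ?case using insert by (simp add: S_add scB S_scale)
qed

definition bfr :: "'b set \<times> ('b \<Rightarrow> 'b)" where "bfr = (SOME p. is_frame B Q (fst p) id (snd p))"
definition bI where "bI = fst bfr"
definition by' where "by' = snd bfr"

lemma bframe: "is_frame B Q bI id by'"
proof -
  obtain I y where "is_frame B Q I id y" using frame_ex[OF metQ] by blast
  then have "is_frame B Q (fst (I, y)) id (snd (I, y))" by simp
  then have "is_frame B Q (fst bfr) id (snd bfr)" unfolding bfr_def by (rule someI)
  then show ?thesis by (simp add: bI_def by'_def)
qed

lemma bI_fin: "finite bI" using bframe by (simp add: is_frame_def)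
lemma bI_B: "a \<in> bI \<Longrightarrow> a \<in> B" using bframe by (simp add: is_frame_def)
lemma by_B: "a \<in> bI \<Longrightarrow> by' a \<in> B" using bframe by (simp add: is_frame_def)
lemma bexp: "Y \<in> B \<Longrightarrow> (\<Sum>a\<in>bI. Q Y (by' a) *\<^sub>R a) = Y"
proof -
  assume Y: "Y \<in> B"
  have e: "Y = (\<Sum>a\<in>bI. Q Y (by' a) *\<^sub>R id a)" by (rule frame_exp[OF metQ bframe Y])
  show ?thesis using e[symmetric] by (simp only: id_apply)
qed

section \<open>The B-component of the connection\<close>

definition beta where "beta v w = (\<Sum>a\<in>bI. q (S a *v v) w *\<^sub>R by' a)"

lemma beta_B: "beta v w \<in> B"
  unfolding beta_def using subB bI_fin by (intro subspace_sum subspace_scale) (auto simp: by_B)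

lemma beta_Q: assumes Y: "Y \<in> B" shows "Q (beta v w) Y = q (S Y *v v) w"
proof -
  have "Q (beta v w) Y = (\<Sum>a\<in>bI. q (S a *v v) w * Q (by' a) Y)"
    unfolding beta_def using bI_fin by_B Y by (intro qlin1[OF metQ]) auto
  also have "\<dots> = (\<Sum>a\<in>bI. Q Y (by' a) * q (S a *v v) w)"
    using Y by_B by (intro sum.cong refl) (simp add: qsym[OF metQ])
  also have "\<dots> = q (S (\<Sum>a\<in>bI. Q Y (by' a) *\<^sub>R a) *v v) w"
    using bI_fin bI_B by (simp add: S_sum matrix_vector_mult_add_rdistrib smv qsm1 qc1
        sum_distrib_left mv_sum_l)
  also have "\<dots> = q (S Y *v v) w" by (simp add: bexp Y)
  finally show ?thesis .
qed

end


context sdp begin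

abbreviation V where "V \<equiv> (UNIV :: (real^'n) set) \<times> B"

lemma QB0: "Y \<in> B \<Longrightarrow> Q 0 Y = 0" using q01[OF metQ] .
lemma QB0': "Y \<in> B \<Longrightarrow> Q Y 0 = 0" using q02[OF metQ] .

lemma subV: "subspace V" by (rule subspace_Times[OF subspace_UNIV subB])

lemma qt_metric: "metric_on V qt"
  unfolding metric_on_def
proof (intro conjI)
  show "subspace V" by (rule subV)
  show "bilinear_on V qt" unfolding bilinear_on_def
  proof (intro ballI allI conjI)
    fix x y z :: "(real^'n) \<times> 'b" and c :: real
    assume "x \<in> V" "y \<in> V" "z \<in> V"
    then obtain x1 x2 y1 y2 z1 z2 where xyz: "x = (x1, x2)" "y = (y1, y2)" "z = (z1, z2)"
      "x2 \<in> B" "y2 \<in> B" "z2 \<in> B" by (cases x, cases y, cases z) auto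
    show "qt (x + y) z = qt x z + qt y z"
      using xyz by (simp add: qt_eq addB qsimps qadd1[OF metQ])
    show "qt (c *\<^sub>R x) z = c *\<^sub>R qt x z"
      using xyz by (simp add: qt_eq scB qsimps qscale1[OF metQ] algebra_simps)
    show "qt z (x + y) = qt z x + qt z y"
      using xyz by (simp add: qt_eq addB qsimps qadd2[OF metQ])
    show "qt z (c *\<^sub>R x) = c *\<^sub>R qt z x"
      using xyz by (simp add: qt_eq scB qsimps qscale2[OF metQ] algebra_simps)
  qed
  show "\<forall>x\<in>V. \<forall>y\<in>V. qt x y = qt y x"
    by (auto simp: qt_eq qs qsym[OF metQ])
  show "\<forall>x\<in>V. (\<forall>y\<in>V. qt x y = 0) \<longrightarrow> x = 0"
  proof (intro ballI impI)
    fix x assume x: "x \<in> V" and h: "\<forall>y\<in>V. qt x y = 0"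
    obtain x1 x2 where xx: "x = (x1, x2)" "x2 \<in> B" using x by auto
    have "x1 = 0"
    proof (rule q_ext)
      fix u show "q x1 u = q 0 u" using h[rule_format, of "(u, 0)"] xx zB by (simp add: qt_eq QB0' qz1)
    qed
    moreover have "x2 = 0"
    proof (rule nondeg1[OF metQ xx(2)])
      fix Y assume "Y \<in> B" then show "Q x2 Y = 0" using h[rule_format, of "(0, Y)"] xx by (simp add: qt_eq qz2)
    qed
    ultimately show "x = 0" using xx by (simp add: zero_prod_def)
  qed
qed

definition nab :: "((real^'n) \<times> 'b) \<Rightarrow> ((real^'n) \<times> 'b) \<Rightarrow> ((real^'n) \<times> 'b)" where
  "nab p p' = (Kc (fst p) *v fst p' + A (snd p) *v fst p' - S (snd p') *v fst p, beta (fst p) (fst p'))"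

lemma nab_V: "nab p p' \<in> V" by (simp add: nab_def beta_B)

lemma qt_nab: "Z \<in> B \<Longrightarrow> qt (nab (v, X) (w, Y)) (u, Z) =
   q (Kc v *v w) u + q (A X *v w) u - q (S Y *v v) u + q (S Z *v v) w"
  by (simp add: nab_def qt_eq beta_B beta_Q qsimps)

lemma koszul_nab:
  assumes p: "p \<in> V" and p': "p' \<in> V" and z: "z \<in> V"
  shows "2 * qt (nab p p') z = qt (brt p p') z - qt (brt p' z) p + qt (brt z p) p'"
proof -
  obtain v X w Y u Z where pp: "p = (v, X)" "p' = (w, Y)" "z = (u, Z)" "X \<in> B" "Y \<in> B" "Z \<in> B"
    using p p' z by (cases p, cases p', cases z) auto
  have k: "2 * q (Kc v *v w) u = q (br v w) u - q (br w u) v + q (br u v) w" by (rule kos)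
  have a1: "2 * q (A X *v w) u = q (\<phi> X *v w) u - q (\<phi> X *v u) w" by (simp add: qA qs[of w])
  have a2: "2 * q (S Y *v v) u = q (\<phi> Y *v v) u + q (\<phi> Y *v u) v" by (simp add: qS qs[of v])
  have a3: "2 * q (S Z *v v) w = q (\<phi> Z *v v) w + q (\<phi> Z *v w) v" by (simp add: qS qs[of v])
  have r1: "qt (brt p p') z = q (br v w) u + q (\<phi> X *v w) u - q (\<phi> Y *v v) u"
    using pp by (simp add: brt_eq qt_eq zB QB0 qsimps)
  have r2: "qt (brt p' z) p = q (br w u) v + q (\<phi> Y *v u) v - q (\<phi> Z *v w) v"
    using pp by (simp add: brt_eq qt_eq zB QB0 qsimps)
  have r3: "qt (brt z p) p' = q (br u v) w + q (\<phi> Z *v v) w - q (\<phi> X *v u) w"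
    using pp by (simp add: brt_eq qt_eq zB QB0 qsimps)
  have l: "qt (nab p p') z = q (Kc v *v w) u + q (A X *v w) u - q (S Y *v v) u + q (S Z *v v) w"
    using pp by (simp add: qt_nab)
  show ?thesis unfolding l r1 r2 r3 using k a1 a2 a3 by (smt (verit))
qed

lemma lc_nab:
  assumes p: "p \<in> V" and p': "p' \<in> V"
  shows "lc_conn V brt qt p p' = nab p p'"
  unfolding lc_conn_def
proof (rule the_equality)
  show "nab p p' \<in> V \<and> (\<forall>z\<in>V. 2 * qt (nab p p') z = qt (brt p p') z - qt (brt p' z) p + qt (brt z p) p')"
    using koszul_nab[OF p p'] nab_V by blast
  fix w assume w: "w \<in> V \<and> (\<forall>z\<in>V. 2 * qt w z = qt (brt p p') z - qt (brt p' z) p + qt (brt z p) p')"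
  show "w = nab p p'"
  proof (rule q_eqI[OF qt_metric])
    show "w \<in> V" using w by blast
    show "nab p p' \<in> V" by (rule nab_V)
    fix z assume z: "z \<in> V"
    have "2 * qt w z = qt (brt p p') z - qt (brt p' z) p + qt (brt z p) p'" using w z by blast
    then show "qt w z = qt (nab p p') z" using koszul_nab[OF p p' z] by linarith
  qed
qed

lemma brt_V: "p \<in> V \<Longrightarrow> p' \<in> V \<Longrightarrow> brt p p' \<in> V"
  by (cases p, cases p') (auto simp: brt_eq zB)

lemma curv_nab:
  assumes z: "z \<in> V" and p: "p \<in> V" and p': "p' \<in> V"
  shows "curv V brt qt z p p' = nab z (nab p p') - nab p (nab z p') - nab (brt z p) p'"
  unfolding curv_def using z p p' by (simp add: lc_nab nab_V brt_V)

end


context sdp begin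

lemma Kc0: "Kc 0 = 0" using Kc_scale[of 0 0] by simp
lemma Nc_diff: "Nc (x - y) = Nc x - Nc y" using Nc_add[of x "- y"] Nc_scale[of "-1" y] by simp
lemma Nc0: "Nc 0 = 0" using Nc_scale[of 0 0] by simp

lemma beta_add1: "beta (v1 + v2) w = beta v1 w + beta v2 w"
  unfolding beta_def by (simp add: matrix_vector_right_distrib qsimps scaleR_add_left sum.distrib)
lemma beta_scale1: "beta (c *\<^sub>R v) w = c *\<^sub>R beta v w"
  unfolding beta_def by (simp add: matrix_vector_mult_scaleR qsimps scaleR_sum_right)
lemma beta_add2: "beta v (w1 + w2) = beta v w1 + beta v w2"
  unfolding beta_def by (simp add: qsimps scaleR_add_left sum.distrib)
lemma beta_scale2: "beta v (c *\<^sub>R w) = c *\<^sub>R beta v w"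
  unfolding beta_def by (simp add: qsimps scaleR_sum_right)
lemma beta01: "beta 0 w = 0" using beta_scale1[of 0 0 w] by simp
lemma beta02: "beta v 0 = 0" using beta_scale2[of v 0 0] by simp
lemma beta_diff2: "beta v (w1 - w2) = beta v w1 - beta v w2"
  using beta_add2[of v w1 "- w2"] beta_scale2[of v "-1" w2] by simp
lemma beta_diff1: "beta (v1 - v2) w = beta v1 w - beta v2 w"
  using beta_add1[of v1 "- v2" w] beta_scale1[of "-1" v2 w] by simp

lemma nab_add1: "p1 \<in> V \<Longrightarrow> p2 \<in> V \<Longrightarrow> nab (p1 + p2) p' = nab p1 p' + nab p2 p'"
  by (cases p1, cases p2) (auto simp: nab_def Kc_add A_add beta_add1 algebra_simps)
lemma nab_scale1: "p \<in> V \<Longrightarrow> nab (c *\<^sub>R p) p' = c *\<^sub>R nab p p'"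
  by (cases p) (auto simp: nab_def Kc_scale A_scale beta_scale1 smv algebra_simps matrix_vector_mult_scaleR)
lemma nab_add2: "p1 \<in> V \<Longrightarrow> p2 \<in> V \<Longrightarrow> nab p (p1 + p2) = nab p p1 + nab p p2"
  by (cases p1, cases p2) (auto simp: nab_def S_add beta_add2 algebra_simps)
lemma nab_scale2: "p1 \<in> V \<Longrightarrow> nab p (c *\<^sub>R p1) = c *\<^sub>R nab p p1"
  by (cases p1) (auto simp: nab_def S_scale beta_scale2 smv algebra_simps matrix_vector_mult_scaleR)

lemma brt_add1: "z1 \<in> V \<Longrightarrow> z2 \<in> V \<Longrightarrow> p \<in> V \<Longrightarrow> brt (z1 + z2) p = brt z1 p + brt z2 p"
  by (cases z1, cases z2, cases p) (auto simp: brt_eq addB phi_add bsimps algebra_simps)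
lemma brt_scale1: "z \<in> V \<Longrightarrow> p \<in> V \<Longrightarrow> brt (c *\<^sub>R z) p = c *\<^sub>R brt z p"
  by (cases z, cases p) (auto simp: brt_eq scB phi_scale bsimps smv algebra_simps matrix_vector_mult_scaleR)

lemma memV: "x \<in> V \<Longrightarrow> y \<in> V \<Longrightarrow> x + y \<in> V" "x \<in> V \<Longrightarrow> c *\<^sub>R x \<in> V" "x \<in> V \<Longrightarrow> y \<in> V \<Longrightarrow> x - y \<in> V"
  using subV by (auto intro: subspace_add subspace_scale subspace_diff)

lemma curv_lin:
  assumes p: "p \<in> V" and p': "p' \<in> V"
  shows "lin_on V (\<lambda>z. curv V brt qt z p p')"
  unfolding lin_on_def
proof (intro conjI ballI allI)
  fix z assume z: "z \<in> V"
  show "curv V brt qt z p p' \<in> V" using z p p' by (simp add: curv_nab nab_V memV)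
next
  fix z1 z2 assume z1: "z1 \<in> V" and z2: "z2 \<in> V"
  show "curv V brt qt (z1 + z2) p p' = curv V brt qt z1 p p' + curv V brt qt z2 p p'"
    using z1 z2 p p' by (simp add: curv_nab memV nab_add1 nab_add2 nab_V brt_add1 brt_V algebra_simps)
next
  fix z c assume z: "z \<in> V"
  show "curv V brt qt (c *\<^sub>R z) p p' = c *\<^sub>R curv V brt qt z p p'"
    using z p p' by (simp add: curv_nab memV nab_scale1 nab_scale2 nab_V brt_scale1 brt_V algebra_simps)
qed

definition PI :: "((real^'n) + 'b) set" where "PI = Inl ` Basis \<union> Inr ` bI"
definition px :: "((real^'n) + 'b) \<Rightarrow> (real^'n) \<times> 'b" where "px = case_sum (\<lambda>b. (b, 0)) (\<lambda>a. (0, a))"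
definition py :: "((real^'n) + 'b) \<Rightarrow> (real^'n) \<times> 'b" where "py = case_sum (\<lambda>b. (dual b, 0)) (\<lambda>a. (0, by' a))"

lemma sum_PI: "(\<Sum>i\<in>PI. f i) = (\<Sum>b\<in>Basis. f (Inl b)) + (\<Sum>a\<in>bI. f (Inr a))"
proof -
  have "(\<Sum>i\<in>PI. f i) = (\<Sum>i\<in>Inl ` Basis. f i) + (\<Sum>i\<in>Inr ` bI. f i)"
    unfolding PI_def by (rule sum.union_disjoint) (auto simp: bI_fin)
  also have "\<dots> = (\<Sum>b\<in>Basis. f (Inl b)) + (\<Sum>a\<in>bI. f (Inr a))"
    by (simp add: sum.reindex)
  finally show ?thesis .
qed

lemma pframe: "is_frame V qt PI px py"
proof -
  have fin: "finite PI" by (simp add: PI_def bI_fin)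
  have mem: "\<forall>i\<in>PI. px i \<in> V \<and> py i \<in> V" by (auto simp: PI_def px_def py_def zB bI_B by_B)
  have ex: "p = (\<Sum>i\<in>PI. qt p (py i) *\<^sub>R px i)" if p: "p \<in> V" for p
  proof -
    obtain u U where pu: "p = (u, U)" "U \<in> B" using p by auto
    have "(\<Sum>i\<in>PI. qt p (py i) *\<^sub>R px i) = (\<Sum>b\<in>Basis. q u (dual b) *\<^sub>R (b, 0)) + (\<Sum>a\<in>bI. Q U (by' a) *\<^sub>R (0, a))"
      unfolding sum_PI using pu by (simp add: px_def py_def qt_eq zB by_B QB0' qz2)
    also have "\<dots> = ((\<Sum>b\<in>Basis. q u (dual b) *\<^sub>R b), (\<Sum>a\<in>bI. Q U (by' a) *\<^sub>R a))"
      by (simp add: prod_eq_iff fst_sum snd_sum)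
    also have "\<dots> = p" using pu by (simp add: fexp_s bexp)
    finally show ?thesis by simp
  qed
  show ?thesis unfolding is_frame_def using fin mem ex by blast
qed

lemma qt_l: "x \<in> V \<Longrightarrow> qt x (w, 0) = q (fst x) w"
  by (cases x) (simp add: qt_eq zB QB0')
lemma qt_r: "x \<in> V \<Longrightarrow> Y \<in> B \<Longrightarrow> qt x (0, Y) = Q (snd x) Y"
  by (cases x) (simp add: qt_eq qz2)

lemma trace_V:
  assumes f: "lin_on V f"
  shows "trace_on V f = (\<Sum>b\<in>Basis. q (fst (f (b, 0))) (dual b)) + (\<Sum>a\<in>bI. Q (snd (f (0, a))) (by' a))"
proof -
  have m: "\<And>x. x \<in> V \<Longrightarrow> f x \<in> V" by (rule lin_on_mem[OF f])
  have "trace_on V f = (\<Sum>i\<in>PI. qt (f (px i)) (py i))" by (rule trace_on_frame[OF qt_metric f pframe])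
  also have "\<dots> = (\<Sum>b\<in>Basis. qt (f (b, 0)) (dual b, 0)) + (\<Sum>a\<in>bI. qt (f (0, a)) (0, by' a))"
    by (simp add: sum_PI px_def py_def)
  also have "\<dots> = (\<Sum>b\<in>Basis. q (fst (f (b, 0))) (dual b)) + (\<Sum>a\<in>bI. Q (snd (f (0, a))) (by' a))"
    using m zB bI_B by_B by (intro arg_cong2[where f="(+)"] sum.cong refl) (simp_all add: qt_l qt_r)
  finally show ?thesis .
qed

end


context sdp begin

lemma lin_Bm: "linear (\<lambda>u. S (beta u w) *v v)"
  by (rule linearI) (simp_all add: beta_add1 beta_scale1 S_add S_scale beta_B matrix_vector_mult_add_rdistrib smv)

definition Bm where "Bm w v = matrix (\<lambda>u. S (beta u w) *v v)"
lemma Bm_mv: "Bm w v *v u = S (beta u w) *v v" unfolding Bm_def by (rule mw[OF lin_Bm])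

definition Cg where "Cg v X w Y = CM v w + Nc (A X *v w) - Nc (S Y *v v) - S (beta v w) + Kc v ** S Y
   - A X ** Nc w + A X ** S Y + Bm w v + Nc w ** \<phi> X - S Y ** ad v - S Y ** \<phi> X"

lemma Kc_diff: "Kc (x - y) = Kc x - Kc y" using Kc_add[of x "- y"] Kc_scale[of "-1" y] by simp

lemma fst_curv:
  assumes X: "X \<in> B" and Y: "Y \<in> B"
  shows "fst (curv V brt qt (u, 0) (v, X) (w, Y)) = Cg v X w Y *v u"
proof -
  have L: "fst (curv V brt qt (u, 0) (v, X) (w, Y)) =
      Kc u *v (Kc v *v w + A X *v w - S Y *v v) - S (beta v w) *v u
    - (Kc v *v (Kc u *v w - S Y *v u) + A X *v (Kc u *v w - S Y *v u) - S (beta u w) *v v)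
    - (Kc (br u v - \<phi> X *v u) *v w - S Y *v (br u v - \<phi> X *v u))"
    using X Y zB by (simp add: curv_nab nab_def brt_eq A0 phi0)
  have R: "Cg v X w Y *v u = (Kc u *v (Kc v *v w) - Kc v *v (Kc u *v w) - Kc (br u v) *v w)
     + Kc u *v (A X *v w) - Kc u *v (S Y *v v) - S (beta v w) *v u + Kc v *v (S Y *v u)
     - A X *v (Kc u *v w) + A X *v (S Y *v u) + S (beta u w) *v v + Kc (\<phi> X *v u) *v w
     - S Y *v (br v u) - S Y *v (\<phi> X *v u)"
    unfolding Cg_def by (simp add: curv_CM[symmetric] curv_def lc_K lc_N Nc_mv Bm_mv ad_mv
        matrix_vector_mult_add_rdistrib matrix_vector_mult_diff_rdistrib matrix_vector_mul_assoc[symmetric])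
  show ?thesis unfolding L R
    by (simp add: Kc_diff matrix_vector_mult_diff_rdistrib matrix_vector_mult_diff_distrib
        matrix_vector_right_distrib banti[of v u] mvneg2 algebra_simps)
qed

lemma trNc: "trace (Nc z) = 0" unfolding Nc_def by (simp add: trace_sub tr_Kc unimod[OF nil])

lemma SXder: "X \<in> B \<Longrightarrow> S X \<in> derivations br" using Sder by (simp add: S_def)

lemma t2: "trace (S (beta v w)) = q (S H0 *v v) w"
proof -
  have "trace (S (beta v w)) = Q H0 (beta v w)" by (simp add: trS H0tr[OF beta_B])
  also have "\<dots> = Q (beta v w) H0" by (rule qsym[OF metQ H0B beta_B])
  also have "\<dots> = q (S H0 *v v) w" by (rule beta_Q[OF H0B])
  finally show ?thesis .
qed

lemma t3: "trace (Kc v ** S Y) = 0" by (rule tr_skew_sym[OF Kc_skew S_adj])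

lemma t4: "trace (Nc w ** \<phi> X) = trace (A X ** Nc w) + trace (S X ** Nc w)"
proof -
  have "\<phi> X = A X + S X" by (simp add: A_def)
  then have "trace (\<phi> X ** Nc w) = trace (A X ** Nc w) + trace (S X ** Nc w)"
    by (simp add: madd_l trace_add)
  then show ?thesis by (simp add: trace_mul_sym[of "Nc w" "\<phi> X"])
qed

lemma t5: "X \<in> B \<Longrightarrow> trace (S X ** Nc w) = 0"
proof -
  assume X: "X \<in> B"
  have "trace (S X ** Nc w) = trace (S X ** Kc w) - trace (S X ** ad w)"
    unfolding Nc_def by (simp add: mdiff_r trace_sub)
  also have "\<dots> = trace (Kc w ** S X) - trace (ad w ** S X)"
    by (simp add: trace_mul_sym[of "S X" "Kc w"] trace_mul_sym[of "S X" "ad w"])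
  also have "\<dots> = 0" by (simp add: tr_skew_sym[OF Kc_skew S_adj] tr_ad_der[OF nil SXder[OF X]])
  finally show ?thesis .
qed

lemma t6: "Y \<in> B \<Longrightarrow> trace (S Y ** ad v) = 0"
  using tr_ad_der[OF nil SXder, of Y v] trace_mul_sym[of "S Y" "ad v"] by simp

lemma t7: "trace (S Y ** \<phi> X) = trace (A X ** S Y) + trace (S X ** S Y)"
proof -
  have "\<phi> X = A X + S X" by (simp add: A_def)
  then have "trace (\<phi> X ** S Y) = trace (A X ** S Y) + trace (S X ** S Y)"
    by (simp add: madd_l trace_add)
  then show ?thesis by (simp add: trace_mul_sym[of "S Y" "\<phi> X"])
qed

lemma trCg:
  assumes X: "X \<in> B" and Y: "Y \<in> B"
  shows "trace (Cg v X w Y) = ricci_tensor UNIV br q v w - q (S H0 *v v) w + trace (Bm w v) - trace (S X ** S Y)"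
proof -
  have "trace (Cg v X w Y) = trace (CM v w) + trace (Nc (A X *v w)) - trace (Nc (S Y *v v)) - trace (S (beta v w))
    + trace (Kc v ** S Y) - trace (A X ** Nc w) + trace (A X ** S Y) + trace (Bm w v) + trace (Nc w ** \<phi> X)
    - trace (S Y ** ad v) - trace (S Y ** \<phi> X)"
    unfolding Cg_def by (simp only: trace_add trace_sub)
  then show ?thesis using t2 t3 t4 t5[OF X] t6[OF Y] t7 trNc ric_CM by simp
qed

lemma g_part:
  assumes X: "X \<in> B" and Y: "Y \<in> B"
  shows "(\<Sum>b\<in>Basis. q (fst (curv V brt qt (b, 0) (v, X) (w, Y))) (dual b)) =
    ricci_tensor UNIV br q v w - q (S H0 *v v) w + trace (Bm w v) - trace (S X ** S Y)"
proof -
  have "(\<Sum>b\<in>Basis. q (fst (curv V brt qt (b, 0) (v, X) (w, Y))) (dual b)) = (\<Sum>b\<in>Basis. q (Cg v X w Y *v b) (dual b))"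
    by (intro sum.cong refl) (simp only: fst_curv X Y)
  also have "\<dots> = trace (Cg v X w Y)" by (rule tr_frame[symmetric])
  finally show ?thesis using trCg[OF X Y] by simp
qed

lemma tr_Bm: "trace (Bm w v) = (\<Sum>a\<in>bI. q (S (by' a) *v v) (S a *v w))"
proof -
  have "trace (Bm w v) = (\<Sum>b\<in>Basis. q (S (beta b w) *v v) (dual b))" by (simp add: tr_frame Bm_mv)
  also have "\<dots> = (\<Sum>b\<in>Basis. \<Sum>a\<in>bI. q (S (by' a) *v v) (dual b) * q b (S a *v w))"
  proof (rule sum.cong[OF refl])
    fix b
    have "S (beta b w) = (\<Sum>a\<in>bI. q (S a *v b) w *\<^sub>R S (by' a))"
      unfolding beta_def using bI_fin by_B by (rule S_sum)
    then have "q (S (beta b w) *v v) (dual b) = (\<Sum>a\<in>bI. q (S a *v b) w * q (S (by' a) *v v) (dual b))"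
      by (simp add: mv_sum_l smv qsm1 qc1 bI_fin)
    also have "\<dots> = (\<Sum>a\<in>bI. q (S (by' a) *v v) (dual b) * q b (S a *v w))"
      by (simp add: qS2 mult.commute)
    finally show "q (S (beta b w) *v v) (dual b) = (\<Sum>a\<in>bI. q (S (by' a) *v v) (dual b) * q b (S a *v w))" .
  qed
  also have "\<dots> = (\<Sum>a\<in>bI. \<Sum>b\<in>Basis. q (S (by' a) *v v) (dual b) * q b (S a *v w))"
    by (rule sum.swap)
  also have "\<dots> = (\<Sum>a\<in>bI. q (S (by' a) *v v) (S a *v w))" by (simp add: fq[symmetric])
  finally show ?thesis .
qed

lemma snd_curv:
  assumes a: "a \<in> B" and X: "X \<in> B" and Y: "Y \<in> B"
  shows "snd (curv V brt qt (0, a) (v, X) (w, Y)) = - beta v (A a *v w) - beta (\<phi> a *v v) w"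
  using a X Y zB by (simp add: curv_nab nab_def brt_eq Kc0 beta01 bsimps)

lemma b_part:
  assumes X: "X \<in> B" and Y: "Y \<in> B"
  shows "(\<Sum>a\<in>bI. Q (snd (curv V brt qt (0, a) (v, X) (w, Y))) (by' a)) =
     - (\<Sum>a\<in>bI. q (S (by' a) *v v) (A a *v w) + q (S (by' a) *v (\<phi> a *v v)) w)"
proof -
  have h: "Q (snd (curv V brt qt (0, a) (v, X) (w, Y))) (by' a) =
     - (q (S (by' a) *v v) (A a *v w) + q (S (by' a) *v (\<phi> a *v v)) w)" if a: "a \<in> bI" for a
  proof -
    have aB: "a \<in> B" "by' a \<in> B" using a bI_B by_B by auto
    have "Q (- beta v (A a *v w) - beta (\<phi> a *v v) w) (by' a)
       = - Q (beta v (A a *v w)) (by' a) - Q (beta (\<phi> a *v v) w) (by' a)"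
      using aB beta_B negB by (simp add: qdiff1[OF metQ] qneg1[OF metQ])
    then show ?thesis using aB by (simp add: snd_curv X Y beta_Q)
  qed
  have "(\<Sum>a\<in>bI. Q (snd (curv V brt qt (0, a) (v, X) (w, Y))) (by' a)) =
     (\<Sum>a\<in>bI. - (q (S (by' a) *v v) (A a *v w) + q (S (by' a) *v (\<phi> a *v v)) w))"
    by (rule sum.cong[OF refl h])
  then show ?thesis by (simp only: sum_negf)
qed

lemma cancel:
  "(\<Sum>a\<in>bI. q (S (by' a) *v v) (S a *v w)) - (\<Sum>a\<in>bI. q (S (by' a) *v v) (A a *v w) + q (S (by' a) *v (\<phi> a *v v)) w) = 0"
proof -
  have "q (S (by' a) *v v) (S a *v w) - (q (S (by' a) *v v) (A a *v w) + q (S (by' a) *v (\<phi> a *v v)) w) = 0"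
    if a: "a \<in> bI" for a
  proof -
    have aB: "a \<in> B" "by' a \<in> B" using a bI_B by_B by auto
    have c: "\<phi> a ** S (by' a) = S (by' a) ** \<phi> a" using comm[OF aB] by (simp add: S_def)
    have "q (S (by' a) *v v) (S a *v w) - (q (S (by' a) *v v) (A a *v w) + q (S (by' a) *v (\<phi> a *v v)) w)
      = q ((S a + A a) *v (S (by' a) *v v)) w - q (S (by' a) *v (\<phi> a *v v)) w"
      by (simp add: qS2 qA2 matrix_vector_mult_add_rdistrib qsimps)
    also have "\<dots> = q ((\<phi> a ** S (by' a)) *v v) w - q ((S (by' a) ** \<phi> a) *v v) w"
      by (simp add: A_def matrix_vector_mul_assoc)
    also have "\<dots> = 0" by (simp add: c)
    finally show ?thesis .
  qed
  then show ?thesis by (simp add: sum_subtractf[symmetric])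
qed

lemma ric_V:
  assumes X: "X \<in> B" and Y: "Y \<in> B"
  shows "ricci_tensor V brt qt (v, X) (w, Y) = ricci_tensor UNIV br q v w - q (S H0 *v v) w - trace (S X ** S Y)"
proof -
  have p: "(v, X) \<in> V" "(w, Y) \<in> V" using X Y by auto
  have "ricci_tensor V brt qt (v, X) (w, Y) =
      (\<Sum>b\<in>Basis. q (fst (curv V brt qt (b, 0) (v, X) (w, Y))) (dual b)) +
      (\<Sum>a\<in>bI. Q (snd (curv V brt qt (0, a) (v, X) (w, Y))) (by' a))"
    unfolding ricci_tensor_def by (rule trace_V[OF curv_lin[OF p]])
  also have "\<dots> = ricci_tensor UNIV br q v w - q (S H0 *v v) w - trace (S X ** S Y)"
    unfolding g_part[OF X Y] b_part[OF X Y] tr_Bm using cancel[of v w] by simp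
  finally show ?thesis .
qed

lemma ricci_op_V:
  assumes X: "X \<in> B" and Rg: "\<And>v w. ricci_tensor UNIV br q v w = q (Rg *v v) w"
    and X': "X' \<in> B" and X'Q: "\<And>Y. Y \<in> B \<Longrightarrow> Q X' Y = - trace (S X ** S Y)"
  shows "ricci_op V brt qt (v, X) = (Rg *v v - S H0 *v v, X')"
  unfolding ricci_op_def
proof (rule the_equality)
  have c: "qt (Rg *v v - S H0 *v v, X') z = ricci_tensor V brt qt (v, X) z" if z: "z \<in> V" for z
  proof -
    obtain w Y where zz: "z = (w, Y)" "Y \<in> B" using z by auto
    show ?thesis using zz X X' by (simp add: qt_eq ric_V Rg X'Q qd1)
  qed
  show "(Rg *v v - S H0 *v v, X') \<in> V \<and> (\<forall>z\<in>V. qt (Rg *v v - S H0 *v v, X') z = ricci_tensor V brt qt (v, X) z)"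
    using X' c by auto
  fix w' assume w': "w' \<in> V \<and> (\<forall>z\<in>V. qt w' z = ricci_tensor V brt qt (v, X) z)"
  show "w' = (Rg *v v - S H0 *v v, X')"
    by (rule q_eqI[OF qt_metric]) (use w' X' c in auto)
qed

end


lemma trace_zero: "trace (0::real^'n^'n) = 0" by (simp add: trace_def)

context gmet begin

lemma sp_def2: "sym_part q X = (1/2) *\<^sub>R (X + adj q X)" unfolding sym_part_def by simp
lemma sp_add: "sym_part q (X + Y) = sym_part q X + sym_part q Y"
  unfolding sp_def2 by (simp add: adj_add algebra_simps)
lemma sp_scale: "sym_part q (c *\<^sub>R X) = c *\<^sub>R sym_part q X"
  unfolding sp_def2 by (simp add: adj_scale algebra_simps)
lemma sp0: "sym_part q 0 = 0" using sp_scale[of 0 0] by simp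
lemma tr_sp: "trace (sym_part q X) = trace X" unfolding sp_def2 by (simp add: msimps tr_adj)

lemma Ric_tensor:
  assumes ric: "\<forall>x. ricci_op UNIV br q x = lam *\<^sub>R x + D *v x"
  shows "ricci_tensor UNIV br q x z = q ((lam *\<^sub>R mat 1 + D) *v x) z"
proof -
  have "ricci_tensor UNIV br q x z = q (lam *\<^sub>R x + D *v x) z" by (rule ric_op_tensor) (use ric in blast)
  moreover have "(lam *\<^sub>R mat 1 + D) *v x = lam *\<^sub>R x + D *v x"
    by (simp add: matrix_vector_mult_add_rdistrib smv)
  ultimately show ?thesis by simp
qed

lemma trRE:
  assumes nil: "nilpotent_lie UNIV br" and Rt: "\<And>x z. ricci_tensor UNIV br q x z = q (R0 *v x) z"
    and E: "E \<in> derivations br"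
  shows "trace (R0 ** E) = 0"
proof -
  have "trace (R0 ** E) = (\<Sum>k\<in>Basis. q ((R0 ** E) *v k) (dual k))" by (rule tr_frame)
  also have "\<dots> = (\<Sum>k\<in>Basis. ricci_tensor UNIV br q (E *v k) (dual k))"
    by (simp add: Rt matrix_vector_mul_assoc[symmetric])
  also have "\<dots> = 0" by (rule tr_ric_der[OF nil E])
  finally show ?thesis .
qed

end

context sdp begin

lemma ricci_final:
  assumes X: "X \<in> B" and Rg: "\<And>v w. ricci_tensor UNIV br q v w = q (Rg *v v) w"
    and X': "X' \<in> B" and X'Q: "\<And>Y. Y \<in> B \<Longrightarrow> Q X' Y = - trace (sym_part q (\<phi> X) ** sym_part q (\<phi> Y))"
  shows "ricci_op V brt qt (v, X) = (Rg *v v - sym_part q (\<phi> H0) *v v, X')"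
  using ricci_op_V[OF X Rg X'] X'Q by (simp add: S_def)

end

theorem proposition4p21:
  fixes br :: "real^'n \<Rightarrow> real^'n \<Rightarrow> real^'n"
    and q :: "real^'n \<Rightarrow> real^'n \<Rightarrow> real"
    and lam :: real
    and D :: "real^'n^'n"
    and A :: "(real^'n^'n) set"
  assumes lie: "lie_algebra_on UNIV br"
    and nil: "nilpotent_lie UNIV br"
    and met: "metric_on UNIV q"
    and D_der: "D \<in> derivations br"
    and ric: "\<forall>x. ricci_op UNIV br q x = lam *\<^sub>R x + D *v x"
    and A_sub: "subspace A"
    and A_der: "A \<subseteq> derivations br"
    and A_ab: "\<forall>f\<in>A. \<forall>g\<in>A. f ** g = g ** f"
    and As_der: "\<forall>f\<in>A. sym_part q f \<in> derivations br"
    and A_As: "\<forall>f\<in>A. \<forall>g\<in>A. f ** sym_part q g = sym_part q g ** f"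
  shows
   "(lam \<noteq> 0 \<and> D \<in> sym_part q ` A \<and>
       (\<forall>f\<in>A. (\<forall>g\<in>A. trace (sym_part q f ** sym_part q g) = 0) \<longrightarrow> f = 0)
     \<longrightarrow> (let qt = sd_metric q (\<lambda>X Y. - (1 / lam) * trace (sym_part q X ** sym_part q Y)) in
          metric_on (UNIV \<times> A) qt \<and>
          (\<forall>p\<in>UNIV \<times> A. ricci_op (UNIV \<times> A) (sd_br br) qt p = lam *\<^sub>R p)))
  \<and> (\<forall>H. lam = 0 \<and> D \<noteq> 0 \<and> H \<in> A \<and> D = sym_part q H \<and>
       (\<forall>f\<in>A. \<forall>g\<in>A. trace (sym_part q f ** sym_part q g) = 0)
     \<longrightarrow> (\<forall>qa. metric_on A qa \<and> (\<forall>X\<in>A. qa H X = trace X) \<longrightarrow>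
          metric_on (UNIV \<times> A) (sd_metric q qa) \<and>
          (\<forall>p\<in>UNIV \<times> A. ricci_op (UNIV \<times> A) (sd_br br) (sd_metric q qa) p = 0)))
  \<and> (lam = 0 \<and> D = 0 \<and> (\<forall>X\<in>A. trace X = 0) \<and>
       (\<forall>f\<in>A. \<forall>g\<in>A. trace (sym_part q f ** sym_part q g) = 0)
     \<longrightarrow> (\<forall>qa. metric_on A qa \<longrightarrow>
          metric_on (UNIV \<times> A) (sd_metric q qa) \<and>
          (\<forall>p\<in>UNIV \<times> A. ricci_op (UNIV \<times> A) (sd_br br) (sd_metric q qa) p = 0)))
  \<and> (lam = 0 \<and> D = 0 \<and> \<not> (\<forall>X\<in>A. trace X = 0) \<and>
       (\<forall>f\<in>A. \<forall>g\<in>A. trace (sym_part q f ** sym_part q g) = 0)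
     \<longrightarrow> (\<forall>qa. metric_on A qa \<and> metric_on {X\<in>A. trace X = 0} qa \<longrightarrow>
          metric_on (UNIV \<times> A \<times> UNIV) (sdH_metric q qa) \<and>
          (\<forall>p\<in>UNIV \<times> A \<times> UNIV. ricci_op (UNIV \<times> A \<times> UNIV) (sdH_br br) (sdH_metric q qa) p = 0)))"
proof -
  interpret g: gmet br q by (rule gmet.intro[OF lie met])
  define R0 where "R0 = lam *\<^sub>R mat 1 + D"
  have Rg: "\<And>v w. ricci_tensor UNIV br q v w = q (R0 *v v) w"
    unfolding R0_def by (rule g.Ric_tensor[OF ric])
  have brA: "sd_br br (v, X) (w, Y) = (br v w + id X *v w - id Y *v v, 0)" if "X \<in> A" "Y \<in> A" for v w X Y
    using A_ab that by (simp add: sd_br_def)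
  have qtA: "sd_metric q Q (v, X) (w, Y) = q v w + Q X Y" for Q v w X Y
    by (simp add: sd_metric_def)
  have AS: "X \<in> A \<Longrightarrow> Y \<in> A \<Longrightarrow> X + Y \<in> A" "X \<in> A \<Longrightarrow> c *\<^sub>R X \<in> A" "0 \<in> A" for X Y c
    using A_sub by (auto intro: subspace_add subspace_scale subspace_0)

  have P1: "lam \<noteq> 0 \<and> D \<in> sym_part q ` A \<and>
       (\<forall>f\<in>A. (\<forall>g\<in>A. trace (sym_part q f ** sym_part q g) = 0) \<longrightarrow> f = 0)
     \<longrightarrow> (let qt = sd_metric q (\<lambda>X Y. - (1 / lam) * trace (sym_part q X ** sym_part q Y)) in
          metric_on (UNIV \<times> A) qt \<and>
          (\<forall>p\<in>UNIV \<times> A. ricci_op (UNIV \<times> A) (sd_br br) qt p = lam *\<^sub>R p))"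
  proof (intro impI)
    assume h: "lam \<noteq> 0 \<and> D \<in> sym_part q ` A \<and>
       (\<forall>f\<in>A. (\<forall>g\<in>A. trace (sym_part q f ** sym_part q g) = 0) \<longrightarrow> f = 0)"
    then have lam: "lam \<noteq> 0" by blast
    obtain F where F: "F \<in> A" "D = sym_part q F" using h by blast
    define Q where "Q = (\<lambda>X Y. - (1 / lam) * trace (sym_part q X ** sym_part q Y))"
    have metQ: "metric_on A Q"
      unfolding metric_on_def
    proof (intro conjI)
      show "subspace A" by (rule A_sub)
      show "bilinear_on A Q" unfolding bilinear_on_def Q_def
        by (simp add: g.sp_add g.sp_scale msimps algebra_simps)
      show "\<forall>x\<in>A. \<forall>y\<in>A. Q x y = Q y x"
      proof (intro ballI)
        fix x y
        show "Q x y = Q y x" unfolding Q_def using trace_mul_sym[of "sym_part q x" "sym_part q y"] by simp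
      qed
      show "\<forall>x\<in>A. (\<forall>y\<in>A. Q x y = 0) \<longrightarrow> x = 0" unfolding Q_def using h lam by auto
    qed
    have H0tr: "Q F Y = trace (id Y)" if Y: "Y \<in> A" for Y
    proof -
      have E: "sym_part q Y \<in> derivations br" using As_der Y by blast
      have "trace (R0 ** sym_part q Y) = 0" by (rule g.trRE[OF nil Rg E])
      then have "lam * trace Y + trace (D ** sym_part q Y) = 0"
        unfolding R0_def by (simp add: madd_l msc_l msimps g.tr_sp)
      then show ?thesis unfolding Q_def using lam F by (simp add: field_simps)
    qed
    have L: "sdp br q A Q id F (sd_br br) (sd_metric q Q)"
    proof (rule sdp.intro)
      show "gmet br q" by (rule gmet.intro[OF lie met])
      show "sdp_axioms br q A Q id F (sd_br br) (sd_metric q Q)"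
        unfolding sdp_axioms_def using metQ nil As_der A_As F(1) H0tr brA qtA by simp
    qed
    have m: "metric_on (UNIV \<times> A) (sd_metric q Q)" by (rule sdp.qt_metric[OF L])
    have r: "ricci_op (UNIV \<times> A) (sd_br br) (sd_metric q Q) p = lam *\<^sub>R p" if p: "p \<in> UNIV \<times> A" for p
    proof -
      obtain v X where pv: "p = (v, X)" "X \<in> A" using p by auto
      have X'Q: "Q (lam *\<^sub>R X) Y = - trace (sym_part q (id X) ** sym_part q (id Y))" for Y
        unfolding Q_def using lam by (simp add: g.sp_scale msimps)
      have "ricci_op (UNIV \<times> A) (sd_br br) (sd_metric q Q) (v, X) = (R0 *v v - sym_part q (id F) *v v, lam *\<^sub>R X)"
        by (rule sdp.ricci_final[OF L pv(2) Rg AS(2)[OF pv(2)] X'Q])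
      also have "\<dots> = lam *\<^sub>R (v, X)"
        unfolding R0_def using F by (simp add: matrix_vector_mult_add_rdistrib smv)
      finally show ?thesis using pv by simp
    qed
    show "let qt = sd_metric q (\<lambda>X Y. - (1 / lam) * trace (sym_part q X ** sym_part q Y)) in
          metric_on (UNIV \<times> A) qt \<and>
          (\<forall>p\<in>UNIV \<times> A. ricci_op (UNIV \<times> A) (sd_br br) qt p = lam *\<^sub>R p)"
      unfolding Let_def Q_def[symmetric] using m r by blast
  qed

  have P23: "metric_on (UNIV \<times> A) (sd_metric q qa) \<and>
          (\<forall>p\<in>UNIV \<times> A. ricci_op (UNIV \<times> A) (sd_br br) (sd_metric q qa) p = 0)"
    if qa: "metric_on A qa" and H: "H \<in> A" and Htr: "\<forall>X\<in>A. qa H X = trace X"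
      and DH: "R0 = sym_part q H"
      and z: "\<forall>f\<in>A. \<forall>g\<in>A. trace (sym_part q f ** sym_part q g) = 0" for qa H
  proof -
    have L: "sdp br q A qa id H (sd_br br) (sd_metric q qa)"
    proof (rule sdp.intro)
      show "gmet br q" by (rule gmet.intro[OF lie met])
      show "sdp_axioms br q A qa id H (sd_br br) (sd_metric q qa)"
        unfolding sdp_axioms_def using qa nil As_der A_As H Htr brA qtA by simp
    qed
    have r: "ricci_op (UNIV \<times> A) (sd_br br) (sd_metric q qa) p = 0" if p: "p \<in> UNIV \<times> A" for p
    proof -
      obtain v X where pv: "p = (v, X)" "X \<in> A" using p by auto
      have X'Q: "qa 0 Y = - trace (sym_part q (id X) ** sym_part q (id Y))" if "Y \<in> A" for Y
        using z pv(2) that q01[OF qa] by simp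
      have "ricci_op (UNIV \<times> A) (sd_br br) (sd_metric q qa) (v, X) = (R0 *v v - sym_part q (id H) *v v, 0)"
        by (rule sdp.ricci_final[OF L pv(2) Rg AS(3) X'Q])
      also have "\<dots> = 0" using DH by (simp add: zero_prod_def)
      finally show ?thesis using pv by simp
    qed
    show ?thesis using sdp.qt_metric[OF L] r by blast
  qed

  have P2: "\<forall>H. lam = 0 \<and> D \<noteq> 0 \<and> H \<in> A \<and> D = sym_part q H \<and>
       (\<forall>f\<in>A. \<forall>g\<in>A. trace (sym_part q f ** sym_part q g) = 0)
     \<longrightarrow> (\<forall>qa. metric_on A qa \<and> (\<forall>X\<in>A. qa H X = trace X) \<longrightarrow>
          metric_on (UNIV \<times> A) (sd_metric q qa) \<and>
          (\<forall>p\<in>UNIV \<times> A. ricci_op (UNIV \<times> A) (sd_br br) (sd_metric q qa) p = 0))"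
  proof (intro allI impI)
    fix H qa
    assume h: "lam = 0 \<and> D \<noteq> 0 \<and> H \<in> A \<and> D = sym_part q H \<and>
       (\<forall>f\<in>A. \<forall>g\<in>A. trace (sym_part q f ** sym_part q g) = 0)"
      and hq: "metric_on A qa \<and> (\<forall>X\<in>A. qa H X = trace X)"
    have DH: "R0 = sym_part q H" using h unfolding R0_def by simp
    show "metric_on (UNIV \<times> A) (sd_metric q qa) \<and>
          (\<forall>p\<in>UNIV \<times> A. ricci_op (UNIV \<times> A) (sd_br br) (sd_metric q qa) p = 0)"
      using P23[of qa H] h hq DH by blast
  qed

  have P3: "lam = 0 \<and> D = 0 \<and> (\<forall>X\<in>A. trace X = 0) \<and>
       (\<forall>f\<in>A. \<forall>g\<in>A. trace (sym_part q f ** sym_part q g) = 0)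
     \<longrightarrow> (\<forall>qa. metric_on A qa \<longrightarrow>
          metric_on (UNIV \<times> A) (sd_metric q qa) \<and>
          (\<forall>p\<in>UNIV \<times> A. ricci_op (UNIV \<times> A) (sd_br br) (sd_metric q qa) p = 0))"
  proof (intro impI allI)
    fix qa
    assume h: "lam = 0 \<and> D = 0 \<and> (\<forall>X\<in>A. trace X = 0) \<and>
       (\<forall>f\<in>A. \<forall>g\<in>A. trace (sym_part q f ** sym_part q g) = 0)" and qa: "metric_on A qa"
    have DH: "R0 = sym_part q 0" using h unfolding R0_def by (simp add: g.sp0)
    have Htr: "\<forall>X\<in>A. qa 0 X = trace X" using h q01[OF qa] by simp
    show "metric_on (UNIV \<times> A) (sd_metric q qa) \<and>
          (\<forall>p\<in>UNIV \<times> A. ricci_op (UNIV \<times> A) (sd_br br) (sd_metric q qa) p = 0)"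
      using P23[of qa 0] h qa DH Htr AS(3) by blast
  qed

  have P4: "lam = 0 \<and> D = 0 \<and> \<not> (\<forall>X\<in>A. trace X = 0) \<and>
       (\<forall>f\<in>A. \<forall>g\<in>A. trace (sym_part q f ** sym_part q g) = 0)
     \<longrightarrow> (\<forall>qa. metric_on A qa \<and> metric_on {X\<in>A. trace X = 0} qa \<longrightarrow>
          metric_on (UNIV \<times> A \<times> UNIV) (sdH_metric q qa) \<and>
          (\<forall>p\<in>UNIV \<times> A \<times> UNIV. ricci_op (UNIV \<times> A \<times> UNIV) (sdH_br br) (sdH_metric q qa) p = 0))"
  proof (intro impI allI)
    fix qa
    assume h: "lam = 0 \<and> D = 0 \<and> \<not> (\<forall>X\<in>A. trace X = 0) \<and>
       (\<forall>f\<in>A. \<forall>g\<in>A. trace (sym_part q f ** sym_part q g) = 0)"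
      and hq: "metric_on A qa \<and> metric_on {X\<in>A. trace X = 0} qa"
    have qa: "metric_on A qa" and qa0: "metric_on {X\<in>A. trace X = 0} qa" using hq by auto
    obtain Z where Z: "Z \<in> A" "trace Z \<noteq> 0" using h by blast
    define Q4 where "Q4 p p' = qa (fst p) (fst p') + snd p * trace (fst p') + snd p' * trace (fst p)"
      for p p' :: "(real^'n^'n) \<times> real"
    have B4: "subspace (A \<times> (UNIV :: real set))" by (rule subspace_Times[OF A_sub subspace_UNIV])
    have metQ: "metric_on (A \<times> UNIV) Q4"
      unfolding metric_on_def
    proof (intro conjI)
      show "subspace (A \<times> (UNIV :: real set))" by (rule B4)
      show "bilinear_on (A \<times> UNIV) Q4" unfolding bilinear_on_def Q4_def
        by (auto simp: qadd1[OF qa] qadd2[OF qa] qscale1[OF qa] qscale2[OF qa] trace_add trace_scale algebra_simps)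
      show "\<forall>x\<in>A \<times> UNIV. \<forall>y\<in>A \<times> UNIV. Q4 x y = Q4 y x"
        unfolding Q4_def by (auto simp: qsym[OF qa])
      show "\<forall>x\<in>A \<times> UNIV. (\<forall>y\<in>A \<times> UNIV. Q4 x y = 0) \<longrightarrow> x = 0"
      proof (intro ballI impI)
        fix x assume x: "x \<in> A \<times> (UNIV :: real set)" and hx: "\<forall>y\<in>A \<times> UNIV. Q4 x y = 0"
        obtain X s where xs: "x = (X, s)" "X \<in> A" using x by auto
        have trX: "trace X = 0" using hx[rule_format, of "(0, 1)"] xs AS(3) q02[OF qa]
          by (simp add: Q4_def trace_def)
        have "X = 0"
        proof (rule nondeg1[OF qa0])
          show "X \<in> {X \<in> A. trace X = 0}" using xs trX by simp
          fix Y assume "Y \<in> {X \<in> A. trace X = 0}"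
          then show "qa X Y = 0" using hx[rule_format, of "(Y, 0)"] xs by (simp add: Q4_def trX)
        qed
        moreover have "s = 0"
          using hx[rule_format, of "(Z, 0)"] xs Z \<open>X = 0\<close> q01[OF qa] by (simp add: Q4_def trace_def)
        ultimately show "x = 0" using xs by (simp add: zero_prod_def)
      qed
    qed
    have H0tr: "Q4 (0, 1) Y = trace (fst Y)" if "Y \<in> A \<times> UNIV" for Y
      using that q01[OF qa] by (auto simp: Q4_def trace_def)
    have brH: "sdH_br br (v, X) (w, Y) = (br v w + fst X *v w - fst Y *v v, 0)"
      if "X \<in> A \<times> UNIV" "Y \<in> A \<times> UNIV" for v w X Y
      using A_ab that by (auto simp: sdH_br_def zero_prod_def split: prod.splits)
    have qtH: "sdH_metric q qa (v, X) (w, Y) = q v w + Q4 X Y" for v w X Y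
      by (cases X, cases Y) (simp add: sdH_metric_def Q4_def)
    have L: "sdp br q (A \<times> UNIV) Q4 fst (0, 1) (sdH_br br) (sdH_metric q qa)"
    proof (rule sdp.intro)
      show "gmet br q" by (rule gmet.intro[OF lie met])
      show "sdp_axioms br q (A \<times> UNIV) Q4 fst (0, 1) (sdH_br br) (sdH_metric q qa)"
        unfolding sdp_axioms_def using metQ nil As_der A_As AS(3) H0tr brH qtH by auto
    qed
    have r: "ricci_op (UNIV \<times> A \<times> UNIV) (sdH_br br) (sdH_metric q qa) p = 0" if p: "p \<in> UNIV \<times> A \<times> UNIV" for p
    proof -
      obtain v X where pv: "p = (v, X)" "X \<in> A \<times> UNIV" using p by auto
      have X'Q: "Q4 0 Y = - trace (sym_part q (fst X) ** sym_part q (fst Y))" if "Y \<in> A \<times> UNIV" for Y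
        using h pv(2) that q01[OF qa] by (auto simp: Q4_def trace_zero)
      have z4: "(0 :: (real^'n^'n) \<times> real) \<in> A \<times> UNIV" using AS(3) by (simp add: zero_prod_def)
      have "ricci_op (UNIV \<times> A \<times> UNIV) (sdH_br br) (sdH_metric q qa) (v, X) = (R0 *v v - sym_part q (fst (0::real^'n^'n, 1::real)) *v v, 0)"
        by (rule sdp.ricci_final[OF L pv(2) Rg z4 X'Q])
      also have "\<dots> = 0" using h by (simp add: R0_def g.sp0 zero_prod_def)
      finally show ?thesis using pv by simp
    qed
    show "metric_on (UNIV \<times> A \<times> UNIV) (sdH_metric q qa) \<and>
          (\<forall>p\<in>UNIV \<times> A \<times> UNIV. ricci_op (UNIV \<times> A \<times> UNIV) (sdH_br br) (sdH_metric q qa) p = 0)"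
      using sdp.qt_metric[OF L] r by blast
  qed
  show ?thesis using P1 P2 P3 P4 by blast
qed


end
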